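(* Let $T$ be a finite tree and let $T'=KC(T,x,y)$ be a KC-transform of $T$. Then for every integer $\ell\ge 1$, the number of walks of length $\ell$ in $T'$ is at least the number of walks of length $\ell$ in $T$.
   Context: KC-transformation: let $x,y$ be two vertices of a tree $T$ such that every interior vertex of the unique $x$–$y$ path $P$ in $T$ has degree two in $T$, and let $z$ be the neighbour of $y$ on $P$. Writing $\Gamma(v)$ for the set of neighbours of $v$, the KC-transform $KC(T,x,y)$ is the tree obtained from $T$ by deleting all edges between $y$ and $\Gamma(y)\setminus\{z\}$ and adding the edges between $x$ and $\Gamma(y)\setminus\{z\}$ instead. A walk of length $\ell$ is a sequence of vertices $v_0,v_1,\dots,v_\ell$ with $v_{i-1}v_i$ an edge for each $i$ (not necessarily closed). *)

theory Defs
  imports Main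
begin

definition simple_graph :: "'a set \<Rightarrow> 'a set set \<Rightarrow> bool" where
  "simple_graph V E \<longleftrightarrow> finite V \<and>
     (\<forall>e\<in>E. \<exists>u v. e = {u, v} \<and> u \<noteq> v \<and> u \<in> V \<and> v \<in> V)"

definition neighbours :: "'a set set \<Rightarrow> 'a \<Rightarrow> 'a set" where
  "neighbours E v = {w. {v, w} \<in> E}"

definition degree :: "'a set set \<Rightarrow> 'a \<Rightarrow> nat" where
  "degree E v = card (neighbours E v)"

definition is_walk :: "'a set \<Rightarrow> 'a set set \<Rightarrow> 'a list \<Rightarrow> bool" where
  "is_walk V E ws \<longleftrightarrow> ws \<noteq> [] \<and> set ws \<subseteq> V \<and>
     (\<forall>i. Suc i < length ws \<longrightarrow> {ws ! i, ws ! Suc i} \<in> E)"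

definition is_path :: "'a set \<Rightarrow> 'a set set \<Rightarrow> 'a list \<Rightarrow> bool" where
  "is_path V E ws \<longleftrightarrow> is_walk V E ws \<and> distinct ws"

definition is_cycle :: "'a set \<Rightarrow> 'a set set \<Rightarrow> 'a list \<Rightarrow> bool" where
  "is_cycle V E ws \<longleftrightarrow> length ws \<ge> 3 \<and> is_path V E ws \<and> {last ws, hd ws} \<in> E"

definition connected_graph :: "'a set \<Rightarrow> 'a set set \<Rightarrow> bool" where
  "connected_graph V E \<longleftrightarrow>
     (\<forall>u\<in>V. \<forall>v\<in>V. \<exists>ws. is_walk V E ws \<and> hd ws = u \<and> last ws = v)"

definition tree :: "'a set \<Rightarrow> 'a set set \<Rightarrow> bool" where
  "tree V E \<longleftrightarrow> simple_graph V E \<and> V \<noteq> {} \<and> connected_graph V E \<and>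
     \<not> (\<exists>ws. is_cycle V E ws)"

definition num_walks :: "'a set \<Rightarrow> 'a set set \<Rightarrow> nat \<Rightarrow> nat" where
  "num_walks V E l = card {ws. is_walk V E ws \<and> length ws = Suc l}"

text \<open>KC-transform: z is the neighbour of y on the x-y path; edges from y to
  Gamma(y) - {z} are replaced by edges from x to Gamma(y) - {z}.\<close>
definition kc_transform :: "'a set set \<Rightarrow> 'a \<Rightarrow> 'a \<Rightarrow> 'a \<Rightarrow> 'a set set" where
  "kc_transform E x y z =
     (E - {{y, w} | w. w \<in> neighbours E y - {z}}) \<union> {{x, w} | w. w \<in> neighbours E y - {z}}"

end

theory Submission
  imports Defs
begin


lemma dw_self: "d = [] \<or> hd d = m \<Longrightarrow> dropWhile (\<lambda>v. v \<noteq> m) d = d"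
  by (cases d) auto

lemma tw_nil: "d = [] \<or> hd d = m \<Longrightarrow> takeWhile (\<lambda>v. v \<noteq> m) d = []"
  by (cases d) auto

lemma dw_hd: "dropWhile (\<lambda>v. v \<noteq> m) w = [] \<or> hd (dropWhile (\<lambda>v. v \<noteq> m) w) = m"
  by (induct w) auto

lemma tw_dw_app: "\<forall>v\<in>set xs. v \<noteq> m \<Longrightarrow> d = [] \<or> hd d = m \<Longrightarrow>
  takeWhile (\<lambda>v. v \<noteq> m) (xs @ d) = xs \<and> dropWhile (\<lambda>v. v \<noteq> m) (xs @ d) = d"
  by (induct xs) (auto intro: tw_nil dw_self)

locale reflp =
  fixes adj :: "'a \<Rightarrow> 'a \<Rightarrow> bool" and S Y :: "'a set" and m :: 'a and \<rho> :: "'a \<Rightarrow> 'a"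
  assumes rsym: "\<And>p q. adj p q \<Longrightarrow> adj q p"
  and rclos: "\<And>p q. p \<in> Y \<Longrightarrow> adj p q \<Longrightarrow> q \<in> S \<Longrightarrow> q \<in> Y \<or> q = m"
  and redge: "\<And>p q. p \<in> Y \<union> {m} \<Longrightarrow> q \<in> Y \<union> {m} \<Longrightarrow> adj p q \<Longrightarrow> adj (\<rho> p) (\<rho> q)"
  and rm: "\<rho> m = m"
  and rinj: "inj_on \<rho> (Y \<union> {m})"
  and rnm: "\<And>p. p \<in> Y \<Longrightarrow> \<rho> p \<noteq> m"
  and rinS: "\<And>p. p \<in> Y \<Longrightarrow> \<rho> p \<in> S"
  and rYS: "Y \<subseteq> S" and rmS: "m \<in> S"
begin

definition hw :: "'a list \<Rightarrow> bool" where
  "hw w \<longleftrightarrow> w \<noteq> [] \<and> set w \<subseteq> S \<and> successively adj w"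

definition Rf :: "'a list \<Rightarrow> 'a list" where
  "Rf w = map \<rho> (takeWhile (\<lambda>v. v \<noteq> m) w) @ dropWhile (\<lambda>v. v \<noteq> m) w"

lemma tw_in_Y:
  "successively adj w \<Longrightarrow> set w \<subseteq> S \<Longrightarrow> w \<noteq> [] \<Longrightarrow> hd w \<in> Y \<union> {m}
   \<Longrightarrow> set (takeWhile (\<lambda>v. v \<noteq> m) w) \<subseteq> Y"
proof (induction w)
  case Nil then show ?case by simp
next
  case (Cons a w)
  show ?case
  proof (cases "a = m")
    case True then show ?thesis by simp
  next
    case False
    then have aY: "a \<in> Y" using Cons.prems by auto
    show ?thesis
    proof (cases "w = []")
      case True then show ?thesis using aY False by simp
    next
      case wne: False
      have "adj a (hd w)" using Cons.prems(1) wne by (simp add: successively_Cons)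
      moreover have "hd w \<in> S" using Cons.prems(2) wne by (cases w) auto
      ultimately have "hd w \<in> Y \<union> {m}" using rclos aY by blast
      then have "set (takeWhile (\<lambda>v. v \<noteq> m) w) \<subseteq> Y"
        using Cons wne by (auto simp: successively_Cons)
      then show ?thesis using aY False by simp
    qed
  qed
qed

lemma Rf_props:
  assumes "hw w" "hd w \<in> Y \<union> {m}"
  shows "hw (Rf w) \<and> length (Rf w) = length w \<and> hd (Rf w) = \<rho> (hd w)
     \<and> (m \<in> set w \<longrightarrow> last (Rf w) = last w) \<and> (m \<in> set (Rf w) \<longleftrightarrow> m \<in> set w)
     \<and> (m \<notin> set w \<longrightarrow> set w \<subseteq> Y)"
proof -
  define t where "t = takeWhile (\<lambda>v. v \<noteq> m) w"
  define d where "d = dropWhile (\<lambda>v. v \<noteq> m) w"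
  have w: "w = t @ d" unfolding t_def d_def by simp
  have tY: "set t \<subseteq> Y" unfolding t_def using tw_in_Y assms unfolding hw_def by blast
  have st: "successively adj t" and sd: "successively adj d"
    and j: "t = [] \<or> d = [] \<or> adj (last t) (hd d)"
    using assms(1) w unfolding hw_def by (metis successively_append_iff)+
  have dhd: "d \<noteq> [] \<Longrightarrow> hd d = m" unfolding d_def
    by (metis (mono_tags, lifting) hd_dropWhile)
  have Rfw: "Rf w = map \<rho> t @ d" unfolding Rf_def t_def d_def by simp
  have smap: "successively adj (map \<rho> t)"
    unfolding successively_map
    by (rule successively_mono[OF st]) (use tY redge in blast)
  have succ: "successively adj (Rf w)"
    unfolding Rfw successively_append_iff
  proof (intro conjI smap sd)
    show "map \<rho> t = [] \<or> d = [] \<or> adj (last (map \<rho> t)) (hd d)"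
    proof (cases "t = [] \<or> d = []")
      case False
      then have "adj (last t) m" using j dhd by auto
      moreover have "last t \<in> Y" using tY False by auto
      ultimately have "adj (\<rho> (last t)) (\<rho> m)" using redge by blast
      then show ?thesis using False dhd rm by (simp add: last_map)
    qed auto
  qed
  have setR: "set (Rf w) \<subseteq> S"
  proof -
    have "set d \<subseteq> S" using assms(1) w unfolding hw_def by auto
    moreover have "\<rho> ` set t \<subseteq> S" using tY rinS by auto
    ultimately show ?thesis unfolding Rfw by auto
  qed
  have len: "length (Rf w) = length w" using Rfw w by (metis length_append length_map)
  have "Rf w \<noteq> []" using len assms(1) unfolding hw_def by auto
  then have hwR: "hw (Rf w)" using succ setR unfolding hw_def by auto
  have hdR: "hd (Rf w) = \<rho> (hd w)"
  proof (cases "t = []")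
    case True
    then have "w = d" using w by simp
    moreover have "hd w = m" using True assms(1) unfolding t_def hw_def
      by (metis takeWhile_eq_Nil_iff)
    moreover have "Rf w = d" using True Rfw by simp
    ultimately show ?thesis using rm by simp
  next
    case False
    then have "hd w = hd t" using w by simp
    then show ?thesis using Rfw False by (simp add: hd_map)
  qed
  have mset: "m \<in> set w \<longleftrightarrow> d \<noteq> []" unfolding d_def
    by (metis (mono_tags, lifting) dropWhile_eq_Nil_conv)
  have tnm: "m \<notin> set t" unfolding t_def by (metis (mono_tags, lifting) set_takeWhileD)
  have lastR: "m \<in> set w \<longrightarrow> last (Rf w) = last w" using mset Rfw w by (metis last_appendR)
  have mR: "m \<in> set (Rf w) \<longleftrightarrow> m \<in> set w"
  proof -
    have "m \<notin> \<rho> ` set t" using tY rnm by auto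
    moreover have "set w = set t \<union> set d" using w by (metis set_append)
    ultimately show ?thesis unfolding Rfw using tnm by auto
  qed
  have nm: "m \<notin> set w \<longrightarrow> set w \<subseteq> Y" using mset w tY by (metis append_Nil2)
  show ?thesis using hwR len hdR lastR mR nm by blast
qed

lemma Rf_inj: "inj_on Rf {w. hw w \<and> hd w \<in> Y \<union> {m}}"
proof (rule inj_onI)
  fix w1 w2 assume a1: "w1 \<in> {w. hw w \<and> hd w \<in> Y \<union> {m}}" and a2: "w2 \<in> {w. hw w \<and> hd w \<in> Y \<union> {m}}"
    and eq: "Rf w1 = Rf w2"
  have key: "takeWhile (\<lambda>v. v \<noteq> m) (Rf w) = map \<rho> (takeWhile (\<lambda>v. v \<noteq> m) w) \<and>
     dropWhile (\<lambda>v. v \<noteq> m) (Rf w) = dropWhile (\<lambda>v. v \<noteq> m) w \<and> set (takeWhile (\<lambda>v. v \<noteq> m) w) \<subseteq> Y"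
    if "hw w" "hd w \<in> Y \<union> {m}" for w
  proof -
    have tY: "set (takeWhile (\<lambda>v. v \<noteq> m) w) \<subseteq> Y" using tw_in_Y that unfolding hw_def by blast
    have nm: "\<forall>v\<in>set (map \<rho> (takeWhile (\<lambda>v. v \<noteq> m) w)). v \<noteq> m" using tY rnm by auto
    have dd: "dropWhile (\<lambda>v. v \<noteq> m) w = [] \<or> hd (dropWhile (\<lambda>v. v \<noteq> m) w) = m"
      by (rule dw_hd)
    have "takeWhile (\<lambda>v. v \<noteq> m) (dropWhile (\<lambda>v. v \<noteq> m) w) = []"
      by (rule tw_nil[OF dd])
    moreover have "dropWhile (\<lambda>v. v \<noteq> m) (dropWhile (\<lambda>v. v \<noteq> m) w) = dropWhile (\<lambda>v. v \<noteq> m) w"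
      by (rule dw_self[OF dd])
    have "takeWhile (\<lambda>v. v \<noteq> m) (Rf w) = map \<rho> (takeWhile (\<lambda>v. v \<noteq> m) w) \<and>
       dropWhile (\<lambda>v. v \<noteq> m) (Rf w) = dropWhile (\<lambda>v. v \<noteq> m) w"
      unfolding Rf_def by (rule tw_dw_app[OF nm dd])
    then show ?thesis using tY by blast
  qed
  have A1: "hw w1" "hd w1 \<in> Y \<union> {m}" and A2: "hw w2" "hd w2 \<in> Y \<union> {m}" using a1 a2 by auto
  note k1 = key[OF A1] and k2 = key[OF A2]
  have "map \<rho> (takeWhile (\<lambda>v. v \<noteq> m) w1) = map \<rho> (takeWhile (\<lambda>v. v \<noteq> m) w2)"
    using k1 k2 eq by metis
  moreover have "inj_on \<rho> (set (takeWhile (\<lambda>v. v \<noteq> m) w1) \<union> set (takeWhile (\<lambda>v. v \<noteq> m) w2))"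
    using k1 k2 by (rule_tac inj_on_subset[OF rinj]) auto
  ultimately have "takeWhile (\<lambda>v. v \<noteq> m) w1 = takeWhile (\<lambda>v. v \<noteq> m) w2"
    using inj_on_map_eq_map by blast
  moreover have "dropWhile (\<lambda>v. v \<noteq> m) w1 = dropWhile (\<lambda>v. v \<noteq> m) w2"
    using k1 k2 eq by metis
  ultimately show "w1 = w2" by (metis takeWhile_dropWhile_id)
qed

lemma hw_rev: "hw w \<Longrightarrow> hw (rev w)"
  unfolding hw_def by (auto intro: successively_mono rsym)

definition Rc :: "'a list \<Rightarrow> 'a list" where
  "Rc w = (if m \<in> set w then rev (Rf (rev (Rf w))) else map \<rho> w)"

lemma map_props:
  assumes "hw w" "set w \<subseteq> Y"
  shows "hw (map \<rho> w)"
proof -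
  have "successively (\<lambda>p q. adj (\<rho> p) (\<rho> q)) w"
  proof (rule successively_mono[of adj])
    show "successively adj w" using assms(1) hw_def by blast
    fix p q assume "p \<in> set w" "q \<in> set w" "adj p q"
    then show "adj (\<rho> p) (\<rho> q)" using assms(2) redge by blast
  qed
  then show ?thesis using assms rinS unfolding hw_def successively_map by auto
qed

lemma Rc_props:
  assumes "hw w" "hd w = u" "last w = u" "u \<in> Y \<union> {m}"
  shows "hw (Rc w) \<and> length (Rc w) = length w \<and> hd (Rc w) = \<rho> u \<and> last (Rc w) = \<rho> u
     \<and> (m \<in> set (Rc w) \<longleftrightarrow> m \<in> set w)"
proof (cases "m \<in> set w")
  case True
  note P1 = Rf_props[OF assms(1) assms(4)[folded assms(2)]]
  have h1: "hw (rev (Rf w))" using P1 hw_rev by blast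
  have l1: "last (Rf w) = u" using P1 True assms(3) by blast
  have hh: "hd (rev (Rf w)) = u" using h1 l1 by (simp add: hd_rev)
  note P2 = Rf_props[OF h1, unfolded hh, OF assms(4)]
  have m2: "m \<in> set (rev (Rf w))" using P1 True by simp
  have "hw (rev (Rf (rev (Rf w))))" using P2 hw_rev by blast
  moreover have "length (rev (Rf (rev (Rf w)))) = length w" using P1 P2 by simp
  moreover have "hd (rev (Rf (rev (Rf w)))) = \<rho> u"
  proof -
    have "last (Rf (rev (Rf w))) = last (rev (Rf w))" using P2 m2 by blast
    also have "\<dots> = hd (Rf w)" using h1 by (simp add: last_rev)
    also have "\<dots> = \<rho> u" using P1 assms(2) by simp
    finally show ?thesis using P2 unfolding hw_def by (simp add: hd_rev)
  qed
  moreover have "last (rev (Rf (rev (Rf w)))) = \<rho> u"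
    using P2 unfolding hw_def by (simp add: last_rev)
  moreover have "m \<in> set (rev (Rf (rev (Rf w))))" using P2 m2 by simp
  ultimately show ?thesis using True unfolding Rc_def by simp
next
  case False
  note P1 = Rf_props[OF assms(1) assms(4)[folded assms(2)]]
  have wY: "set w \<subseteq> Y" using P1 False by blast
  have "m \<notin> \<rho> ` set w" using wY rnm by auto
  moreover have "w \<noteq> []" using assms(1) hw_def by blast
  ultimately show ?thesis using False map_props[OF assms(1) wY] assms(2,3)
    unfolding Rc_def by (simp add: hd_map last_map)
qed

lemma Rc_inj:
  assumes "u \<in> Y \<union> {m}"
  shows "inj_on Rc {w. hw w \<and> hd w = u \<and> last w = u}"
proof (rule inj_onI)
  fix w1 w2 assume a1: "w1 \<in> {w. hw w \<and> hd w = u \<and> last w = u}"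
    and a2: "w2 \<in> {w. hw w \<and> hd w = u \<and> last w = u}" and eq: "Rc w1 = Rc w2"
  have A1: "hw w1" "hd w1 = u" "last w1 = u" and A2: "hw w2" "hd w2 = u" "last w2 = u"
    using a1 a2 by auto
  have same: "m \<in> set w1 \<longleftrightarrow> m \<in> set w2"
    using Rc_props[OF A1 assms] Rc_props[OF A2 assms] eq by metis
  show "w1 = w2"
  proof (cases "m \<in> set w1")
    case True
    then have T2: "m \<in> set w2" using same by blast
    have r: "Rc w = rev (Rf (rev (Rf w)))" if "m \<in> set w" for w using that Rc_def by simp
    have dom: "hw (rev (Rf w)) \<and> hd (rev (Rf w)) \<in> Y \<union> {m} \<and> hw w \<and> hd w \<in> Y \<union> {m}"
      if "hw w" "hd w = u" "last w = u" "m \<in> set w" for w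
    proof -
      note P1 = Rf_props[OF that(1) assms[folded that(2)]]
      have h1: "hw (rev (Rf w))" using P1 hw_rev by blast
      have "last (Rf w) = u" using P1 that(3,4) by metis
      then have "hd (rev (Rf w)) = u" using h1 by (simp add: hd_rev)
      then show ?thesis using h1 that assms by simp
    qed
    have "Rf (rev (Rf w1)) = Rf (rev (Rf w2))" using eq r[OF True] r[OF T2] by simp
    then have "rev (Rf w1) = rev (Rf w2)"
      using Rf_inj dom[OF A1 True] dom[OF A2 T2] unfolding inj_on_def by blast
    then have "Rf w1 = Rf w2" by simp
    then show ?thesis using Rf_inj dom[OF A1 True] dom[OF A2 T2] unfolding inj_on_def by blast
  next
    case False
    then have F2: "m \<notin> set w2" using same by blast
    have Y1: "set w1 \<subseteq> Y" using Rf_props[OF A1(1) assms[folded A1(2)]] False by blast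
    have Y2: "set w2 \<subseteq> Y" using Rf_props[OF A2(1) assms[folded A2(2)]] F2 by blast
    have "map \<rho> w1 = map \<rho> w2" using eq False F2 unfolding Rc_def by simp
    moreover have "inj_on \<rho> (set w1 \<union> set w2)" using Y1 Y2 by (rule_tac inj_on_subset[OF rinj]) auto
    ultimately show ?thesis using inj_on_map_eq_map by blast
  qed
qed

end


definition hH :: "'a set \<Rightarrow> 'a set \<Rightarrow> 'a set set \<Rightarrow> 'a list \<Rightarrow> bool" where
  "hH V Bo E h \<longleftrightarrow> h \<noteq> [] \<and> set h \<subseteq> V - Bo \<and> successively (\<lambda>p q. {p,q} \<in> E) h"

lemma len_dw_less: "w \<noteq> [] \<Longrightarrow> P (hd w) \<Longrightarrow> length (dropWhile P w) < length w"
  by (cases w) (auto simp: length_dropWhile_le le_imp_less_Suc)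

lemma tw_dw_split: "\<forall>v\<in>set xs. Q v \<Longrightarrow> ys = [] \<or> \<not> Q (hd ys) \<Longrightarrow>
   takeWhile Q (xs @ ys) = xs \<and> dropWhile Q (xs @ ys) = ys"
proof (induct xs)
  case Nil then show ?case by (cases ys) auto
next
  case (Cons a xs) then show ?case by simp
qed

lemma dw_hd_not: "dropWhile Q w = [] \<or> \<not> Q (hd (dropWhile Q w))"
  by (induct w) auto

lemma tw_ne: "w \<noteq> [] \<Longrightarrow> Q (hd w) \<Longrightarrow> takeWhile Q w \<noteq> [] \<and> hd (takeWhile Q w) = hd w"
  by (cases w) auto

function glue :: "'a set \<Rightarrow> ('a list \<Rightarrow> 'a list) \<Rightarrow> ('a list \<Rightarrow> 'a list) \<Rightarrow> bool \<Rightarrow> 'a list \<Rightarrow> 'a list" where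
  "glue Bo iS iC st w = (if w = [] then [] else if hd w \<in> Bo then
      takeWhile (\<lambda>v. v \<in> Bo) w @ glue Bo iS iC False (dropWhile (\<lambda>v. v \<in> Bo) w)
    else (if dropWhile (\<lambda>v. v \<notin> Bo) w = [] then (if st then w else iS w)
      else (if st then rev (iS (rev (takeWhile (\<lambda>v. v \<notin> Bo) w))) else iC (takeWhile (\<lambda>v. v \<notin> Bo) w))
           @ glue Bo iS iC False (dropWhile (\<lambda>v. v \<notin> Bo) w)))"
  by pat_completeness auto
termination
  by (relation "measure (\<lambda>(Bo,iS,iC,st,w). length w)") (auto intro: len_dw_less)

declare glue.simps[simp del]

locale gluep =
  fixes Bo V :: "'a set" and E1 E2 :: "'a set set" and u1 u2 :: 'a and iS iC :: "'a list \<Rightarrow> 'a list"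
  assumes A1: "\<And>p q. p \<notin> Bo \<Longrightarrow> q \<notin> Bo \<Longrightarrow> {p,q} \<in> E1 \<Longrightarrow> {p,q} \<in> E2"
  and A2: "\<And>p q. p \<in> Bo \<Longrightarrow> q \<in> Bo \<Longrightarrow> {p,q} \<in> E1 \<Longrightarrow> {p,q} \<in> E2"
  and A3: "\<And>p q. p \<notin> Bo \<Longrightarrow> q \<in> Bo \<Longrightarrow> {p,q} \<in> E1 \<Longrightarrow> p = u1 \<and> {u2,q} \<in> E2"
  and iSp: "\<And>h. hH V Bo E1 h \<Longrightarrow> hd h = u1 \<Longrightarrow> hH V Bo E1 (iS h) \<and> hd (iS h) = u2 \<and> length (iS h) = length h"
  and iSinj: "inj_on iS {h. hH V Bo E1 h \<and> hd h = u1}"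
  and iCp: "\<And>h. hH V Bo E1 h \<Longrightarrow> hd h = u1 \<Longrightarrow> last h = u1 \<Longrightarrow>
     hH V Bo E1 (iC h) \<and> hd (iC h) = u2 \<and> last (iC h) = u2 \<and> length (iC h) = length h"
  and iCinj: "inj_on iC {h. hH V Bo E1 h \<and> hd h = u1 \<and> last h = u1}"
begin

abbreviation "G \<equiv> glue Bo iS iC"

definition Dm :: "bool \<Rightarrow> 'a list \<Rightarrow> bool" where
  "Dm st w \<longleftrightarrow> (w = [] \<or> (set w \<subseteq> V \<and> successively (\<lambda>p q. {p,q} \<in> E1) w))
     \<and> (\<not> st \<longrightarrow> w = [] \<or> hd w \<in> Bo \<or> hd w = u1)"

lemma hH2: "hH V Bo E1 h \<Longrightarrow> successively (\<lambda>p q. {p,q} \<in> E2) h \<and> set h \<subseteq> V \<and> h \<noteq> [] \<and> (\<forall>v\<in>set h. v \<notin> Bo)"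
  unfolding hH_def by (auto intro: successively_mono A1)

lemma Bo_case:
  assumes "Dm st w" "w \<noteq> []" "hd w \<in> Bo"
  defines "b \<equiv> takeWhile (\<lambda>v. v \<in> Bo) w" and "r \<equiv> dropWhile (\<lambda>v. v \<in> Bo) w"
  shows "w = b @ r \<and> b \<noteq> [] \<and> (\<forall>v\<in>set b. v \<in> Bo) \<and> set b \<subseteq> V \<and> successively (\<lambda>p q. {p,q} \<in> E2) b
     \<and> Dm False r \<and> (r \<noteq> [] \<longrightarrow> hd r \<notin> Bo \<and> hd r = u1 \<and> {last b, u2} \<in> E2) \<and> hd b = hd w"
proof -
  have w: "w = b @ r" unfolding b_def r_def by simp
  have bne: "b \<noteq> [] \<and> hd b = hd w" unfolding b_def using tw_ne assms(2,3) by metis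
  have bB: "\<forall>v\<in>set b. v \<in> Bo" unfolding b_def by (metis (mono_tags, lifting) set_takeWhileD)
  have sw: "set w \<subseteq> V" "successively (\<lambda>p q. {p,q} \<in> E1) w" using assms(1,2) unfolding Dm_def by auto
  have sb: "successively (\<lambda>p q. {p,q} \<in> E1) b" and sr: "successively (\<lambda>p q. {p,q} \<in> E1) r"
    and jn: "b = [] \<or> r = [] \<or> {last b, hd r} \<in> E1"
    using sw(2) w by (metis successively_append_iff)+
  have sb2: "successively (\<lambda>p q. {p,q} \<in> E2) b" using sb bB by (auto intro: successively_mono A2)
  have rB: "r = [] \<or> hd r \<notin> Bo" unfolding r_def using dw_hd_not[of "\<lambda>v. v \<in> Bo" w] by simp
  have rr: "r \<noteq> [] \<longrightarrow> hd r \<notin> Bo \<and> hd r = u1 \<and> {last b, u2} \<in> E2"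
  proof
    assume "r \<noteq> []"
    then have h: "hd r \<notin> Bo" "{hd r, last b} \<in> E1" using rB jn bne by (auto simp: insert_commute)
    have "last b \<in> Bo" using bB bne by auto
    then have "hd r = u1 \<and> {u2, last b} \<in> E2" using A3 h by blast
    then show "hd r \<notin> Bo \<and> hd r = u1 \<and> {last b, u2} \<in> E2" using h by (auto simp: insert_commute)
  qed
  have rV: "set r \<subseteq> V" and bV: "set b \<subseteq> V" using sw(1) w by (metis Un_subset_iff set_append)+
  have "Dm False r" unfolding Dm_def using sr rV rr by blast
  then show ?thesis using w bne bB bV sb2 rr by blast
qed

lemma H_case:
  assumes "Dm st w" "w \<noteq> []" "hd w \<notin> Bo"
  defines "h \<equiv> takeWhile (\<lambda>v. v \<notin> Bo) w" and "r \<equiv> dropWhile (\<lambda>v. v \<notin> Bo) w"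
  shows "w = h @ r \<and> hH V Bo E1 h \<and> hd h = hd w \<and> Dm False r \<and> (r \<noteq> [] \<longrightarrow> hd r \<in> Bo \<and> last h = u1 \<and> {u2, hd r} \<in> E2)
    \<and> (\<not> st \<longrightarrow> hd h = u1)"
proof -
  have w: "w = h @ r" unfolding h_def r_def by simp
  have hne: "h \<noteq> [] \<and> hd h = hd w" unfolding h_def using tw_ne[of w "\<lambda>v. v \<notin> Bo"] assms(2,3) by simp
  have hB: "\<forall>v\<in>set h. v \<notin> Bo" unfolding h_def by (metis (mono_tags, lifting) set_takeWhileD)
  have sw: "set w \<subseteq> V" "successively (\<lambda>p q. {p,q} \<in> E1) w" using assms(1,2) unfolding Dm_def by auto
  have sh: "successively (\<lambda>p q. {p,q} \<in> E1) h" and sr: "successively (\<lambda>p q. {p,q} \<in> E1) r"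
    and jn: "h = [] \<or> r = [] \<or> {last h, hd r} \<in> E1"
    using sw(2) w by (metis successively_append_iff)+
  have rV: "set r \<subseteq> V" and hV: "set h \<subseteq> V" using sw(1) w by (metis Un_subset_iff set_append)+
  have hH: "hH V Bo E1 h" unfolding hH_def using hne hB sh hV by blast
  have rB: "r = [] \<or> hd r \<in> Bo" unfolding r_def using dw_hd_not[of "\<lambda>v. v \<notin> Bo" w] by simp
  have rr: "r \<noteq> [] \<longrightarrow> hd r \<in> Bo \<and> last h = u1 \<and> {u2, hd r} \<in> E2"
  proof
    assume "r \<noteq> []"
    then have h: "hd r \<in> Bo" "{last h, hd r} \<in> E1" using rB jn hne by auto
    have "last h \<notin> Bo" using hB hne by auto
    then show "hd r \<in> Bo \<and> last h = u1 \<and> {u2, hd r} \<in> E2" using A3 h by blast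
  qed
  have "Dm False r" unfolding Dm_def using sr rV rB by blast
  moreover have "\<not> st \<longrightarrow> hd h = u1" using assms(1,2,3) hne unfolding Dm_def by auto
  ultimately show ?thesis using w hne hH rr by blast
qed

lemma hH_rev: "hH V' Bo' E h \<Longrightarrow> hH V' Bo' E (rev h)"
  unfolding hH_def by (auto intro: successively_mono simp: insert_commute)

lemma img_props:
  assumes "hH V Bo E1 h" "last h = u1" "\<not> st \<longrightarrow> hd h = u1"
  shows "hH V Bo E1 (if st then rev (iS (rev h)) else iC h) \<and> last (if st then rev (iS (rev h)) else iC h) = u2
    \<and> length (if st then rev (iS (rev h)) else iC h) = length h \<and> (\<not> st \<longrightarrow> hd (if st then rev (iS (rev h)) else iC h) = u2)"
proof (cases st)
  case True
  have r: "hH V Bo E1 (rev h)" "hd (rev h) = u1" using hH_rev assms(1,2) hH_def by (auto simp: hd_rev)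
  note p = iSp[OF r]
  have "hH V Bo E1 (rev (iS (rev h)))" using p hH_rev by blast
  moreover have "last (rev (iS (rev h))) = u2" using p unfolding hH_def by (simp add: last_rev)
  ultimately show ?thesis using True p by simp
next
  case False
  then show ?thesis using iCp assms by simp
qed

lemma glue_ok:
  "Dm st w \<Longrightarrow> length (G st w) = length w \<and> set (G st w) \<subseteq> V
     \<and> successively (\<lambda>p q. {p,q} \<in> E2) (G st w)
     \<and> (w \<noteq> [] \<longrightarrow> (hd w \<in> Bo \<longrightarrow> hd (G st w) = hd w) \<and> (hd w \<notin> Bo \<longrightarrow> hd (G st w) \<notin> Bo \<and> (\<not> st \<longrightarrow> hd (G st w) = u2)))"
proof (induction "length w" arbitrary: st w rule: less_induct)
  case less
  show ?case
  proof (cases "w = []")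
    case True then show ?thesis by (simp add: glue.simps)
  next
    case wne: False
    show ?thesis
    proof (cases "hd w \<in> Bo")
      case True
      define b where "b = takeWhile (\<lambda>v. v \<in> Bo) w"
      define r where "r = dropWhile (\<lambda>v. v \<in> Bo) w"
      note bc = Bo_case[OF less.prems wne True, folded b_def r_def]
      have Gw: "G st w = b @ G False r" using wne True unfolding b_def r_def by (simp add: glue.simps)
      have w: "w = b @ r" and bne: "b \<noteq> []" and Dr: "Dm False r"
        and rr: "r \<noteq> [] \<longrightarrow> hd r \<notin> Bo \<and> hd r = u1 \<and> {last b, u2} \<in> E2" using bc by blast+
      have lr: "length r < length w" using w bne by simp
      note IH = less.hyps[OF lr Dr]
      have IH': "length (G False r) = length r \<and> set (G False r) \<subseteq> V \<and> successively (\<lambda>p q. {p,q} \<in> E2) (G False r)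
        \<and> (r \<noteq> [] \<longrightarrow> hd (G False r) = u2)"
        using IH rr by blast
      have "successively (\<lambda>p q. {p,q} \<in> E2) (G st w)"
        unfolding Gw successively_append_iff using bc IH' rr by (metis length_0_conv)
      moreover have "length (G st w) = length w" using Gw IH' w by (metis length_append)
      moreover have "set (G st w) \<subseteq> V" using Gw IH' conjunct1[OF conjunct2[OF conjunct2[OF conjunct2[OF bc]]]]
        by (metis Un_subset_iff set_append)
      moreover have "hd (G st w) = hd w"
      proof -
        have "b \<noteq> []" "hd b = hd w" using bc by blast+
        then show ?thesis unfolding Gw by simp
      qed
      ultimately show ?thesis using True by blast
    next
      case False
      define h where "h = takeWhile (\<lambda>v. v \<notin> Bo) w"
      define r where "r = dropWhile (\<lambda>v. v \<notin> Bo) w"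
      note hc = H_case[OF less.prems wne False, folded h_def r_def]
      show ?thesis
      proof (cases "r = []")
        case True
        have Gw: "G st w = (if st then w else iS w)" using wne False True unfolding r_def by (simp add: glue.simps)
        have hw: "h = w" using hc True by simp
        have "hH V Bo E1 h" using hc by blast
        then have hh: "hH V Bo E1 w" using hw by simp
        show ?thesis
        proof (cases st)
          case True
          then have "G st w = w" using Gw by simp
          then show ?thesis using hH2[OF hh] True by auto
        next
          case st: False
          have "hd h = u1" using hc st by blast
          then have hdw: "hd w = u1" using hw by simp
          have ip: "hH V Bo E1 (iS w) \<and> hd (iS w) = u2 \<and> length (iS w) = length w" using iSp[OF hh hdw] .
          have "G st w = iS w" using Gw st by simp
          then show ?thesis using st ip hH2[of "iS w"] False by auto
        qed
      next
        case rne: False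
        have w: "w = h @ r" and hh: "hH V Bo E1 h" and Dr: "Dm False r"
          and rr: "hd r \<in> Bo \<and> last h = u1 \<and> {u2, hd r} \<in> E2" and sth: "\<not> st \<longrightarrow> hd h = u1"
          using hc rne by blast+
        define img where "img = (if st then rev (iS (rev h)) else iC h)"
        have dne: "dropWhile (\<lambda>v. v \<notin> Bo) w \<noteq> []" using rne unfolding r_def .
        have Gw: "G st w = img @ G False r" unfolding r_def h_def img_def
          by (subst glue.simps) (use wne False dne in \<open>simp del: dropWhile_eq_Nil_conv\<close>)
        have ip: "hH V Bo E1 img \<and> last img = u2 \<and> length img = length h \<and> (\<not> st \<longrightarrow> hd img = u2)"
          unfolding img_def using img_props hh rr sth by blast
        have lr: "length r < length w" using w hh unfolding hH_def by simp
        note IH = less.hyps[OF lr Dr]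
        have IH': "length (G False r) = length r \<and> set (G False r) \<subseteq> V \<and> successively (\<lambda>p q. {p,q} \<in> E2) (G False r)
          \<and> hd (G False r) = hd r"
          using IH rr rne by blast
        note i2 = hH2[of img]
        have "G False r \<noteq> []" using IH' rne by auto
        then have "successively (\<lambda>p q. {p,q} \<in> E2) (G st w)"
          unfolding Gw successively_append_iff using i2 ip IH' rr by auto
        moreover have "length (G st w) = length w" using Gw IH' ip w by (metis length_append)
        moreover have "set (G st w) \<subseteq> V" using Gw IH' i2 ip by auto
        moreover have "hd (G st w) \<notin> Bo \<and> (\<not> st \<longrightarrow> hd (G st w) = u2)" using Gw i2 ip
          by (metis hd_append2 hd_in_set)
        ultimately show ?thesis using False by blast
      qed
    qed
  qed
qed

lemma G_nil: "G st [] = []" by (simp add: glue.simps)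

lemma Bo_dec:
  assumes "Dm st w" "w \<noteq> []" "hd w \<in> Bo"
  shows "G st w = takeWhile (\<lambda>v. v \<in> Bo) w @ G False (dropWhile (\<lambda>v. v \<in> Bo) w)
    \<and> (\<forall>v\<in>set (takeWhile (\<lambda>v. v \<in> Bo) w). v \<in> Bo)
    \<and> (G False (dropWhile (\<lambda>v. v \<in> Bo) w) = [] \<or> hd (G False (dropWhile (\<lambda>v. v \<in> Bo) w)) \<notin> Bo)
    \<and> Dm False (dropWhile (\<lambda>v. v \<in> Bo) w)
    \<and> length (dropWhile (\<lambda>v. v \<in> Bo) w) < length w"
proof -
  define b where "b = takeWhile (\<lambda>v. v \<in> Bo) w"
  define r where "r = dropWhile (\<lambda>v. v \<in> Bo) w"
  note bc = Bo_case[OF assms, folded b_def r_def]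
  have w: "w = b @ r" and bne: "b \<noteq> []" and Dr: "Dm False r" and bB: "\<forall>v\<in>set b. v \<in> Bo"
    and rr: "r \<noteq> [] \<longrightarrow> hd r \<notin> Bo \<and> hd r = u1 \<and> {last b, u2} \<in> E2" using bc by blast+
  have Gw: "G st w = b @ G False r" using assms(2,3) unfolding b_def r_def by (simp add: glue.simps)
  have "G False r = [] \<or> hd (G False r) \<notin> Bo"
  proof (cases "r = []")
    case True then show ?thesis by (simp add: G_nil)
  next
    case False then show ?thesis using glue_ok[OF Dr] rr by blast
  qed
  moreover have "length r < length w" using w bne by simp
  ultimately show ?thesis using Gw bB Dr unfolding b_def r_def by blast
qed

definition img :: "bool \<Rightarrow> 'a list \<Rightarrow> 'a list" where
  "img st w = (if dropWhile (\<lambda>v. v \<notin> Bo) w = [] then (if st then w else iS w)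
      else (if st then rev (iS (rev (takeWhile (\<lambda>v. v \<notin> Bo) w))) else iC (takeWhile (\<lambda>v. v \<notin> Bo) w)))"

lemma H_dec:
  assumes "Dm st w" "w \<noteq> []" "hd w \<notin> Bo"
  shows "G st w = img st w @ G False (dropWhile (\<lambda>v. v \<notin> Bo) w)
    \<and> img st w \<noteq> [] \<and> (\<forall>v\<in>set (img st w). v \<notin> Bo)
    \<and> (G False (dropWhile (\<lambda>v. v \<notin> Bo) w) = [] \<or> hd (G False (dropWhile (\<lambda>v. v \<notin> Bo) w)) \<in> Bo)
    \<and> (G False (dropWhile (\<lambda>v. v \<notin> Bo) w) = [] \<longleftrightarrow> dropWhile (\<lambda>v. v \<notin> Bo) w = [])
    \<and> Dm False (dropWhile (\<lambda>v. v \<notin> Bo) w)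
    \<and> length (dropWhile (\<lambda>v. v \<notin> Bo) w) < length w"
proof -
  define h where "h = takeWhile (\<lambda>v. v \<notin> Bo) w"
  define r where "r = dropWhile (\<lambda>v. v \<notin> Bo) w"
  note hc = H_case[OF assms, folded h_def r_def]
  have w: "w = h @ r" and hh: "hH V Bo E1 h" and Dr: "Dm False r"
    and rr: "r \<noteq> [] \<longrightarrow> hd r \<in> Bo \<and> last h = u1 \<and> {u2, hd r} \<in> E2" and sth: "\<not> st \<longrightarrow> hd h = u1"
    and hdh: "hd h = hd w"
    using hc by blast+
  have lr: "length r < length w" using w hh unfolding hH_def by simp
  have Gw: "G st w = img st w @ G False r"
  proof (cases "r = []")
    case True
    then show ?thesis using assms(2,3) unfolding img_def r_def by (simp add: glue.simps G_nil)
  next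
    case False
    have dne: "dropWhile (\<lambda>v. v \<notin> Bo) w \<noteq> []" using False unfolding r_def .
    show ?thesis unfolding r_def img_def
      by (subst glue.simps) (simp only: if_not_P[OF dne] if_not_P[OF assms(2)] if_not_P[OF assms(3)])
  qed
  have ip: "img st w \<noteq> [] \<and> (\<forall>v\<in>set (img st w). v \<notin> Bo)"
  proof (cases "r = []")
    case True
    then have hw: "h = w" using w by simp
    then have hhw: "hH V Bo E1 w" using hh by simp
    show ?thesis
    proof (cases st)
      case True then show ?thesis using \<open>r = []\<close> hhw unfolding img_def r_def hH_def by auto
    next
      case False
      then have "hd w = u1" using sth hw by simp
      then have "hH V Bo E1 (iS w)" using iSp hhw by blast
      then show ?thesis using False \<open>r = []\<close> unfolding img_def r_def hH_def by auto
    qed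
  next
    case False
    have dne: "dropWhile (\<lambda>v. v \<notin> Bo) w \<noteq> []" using False unfolding r_def .
    have "img st w = (if st then rev (iS (rev h)) else iC h)"
      unfolding img_def h_def by (rule if_not_P[OF dne])
    then have "hH V Bo E1 (img st w)" using img_props hh rr sth False by presburger
    then show ?thesis unfolding hH_def by auto
  qed
  have gr: "G False r = [] \<or> hd (G False r) \<in> Bo"
  proof (cases "r = []")
    case True then show ?thesis by (simp add: G_nil)
  next
    case False then show ?thesis using glue_ok[OF Dr] rr by metis
  qed
  have "length (G False r) = length r" using glue_ok[OF Dr] by blast
  then have "G False r = [] \<longleftrightarrow> r = []" by auto
  then show ?thesis using Gw ip gr Dr lr unfolding r_def by blast
qed

lemma img_inj:
  assumes "Dm st w1" "w1 \<noteq> []" "hd w1 \<notin> Bo" "Dm st w2" "w2 \<noteq> []" "hd w2 \<notin> Bo"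
    and "img st w1 = img st w2" "dropWhile (\<lambda>v. v \<notin> Bo) w1 = dropWhile (\<lambda>v. v \<notin> Bo) w2"
  shows "w1 = w2"
proof -
  define h1 where "h1 = takeWhile (\<lambda>v. v \<notin> Bo) w1"
  define r1 where "r1 = dropWhile (\<lambda>v. v \<notin> Bo) w1"
  define h2 where "h2 = takeWhile (\<lambda>v. v \<notin> Bo) w2"
  define r2 where "r2 = dropWhile (\<lambda>v. v \<notin> Bo) w2"
  note hc1 = H_case[OF assms(1-3), folded h1_def r1_def]
  note hc2 = H_case[OF assms(4-6), folded h2_def r2_def]
  have w1: "w1 = h1 @ r1" and hh1: "hH V Bo E1 h1"
    and rr1: "r1 \<noteq> [] \<longrightarrow> last h1 = u1" and sth1: "\<not> st \<longrightarrow> hd h1 = u1"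
    using hc1 by blast+
  have w2: "w2 = h2 @ r2" and hh2: "hH V Bo E1 h2"
    and rr2: "r2 \<noteq> [] \<longrightarrow> last h2 = u1" and sth2: "\<not> st \<longrightarrow> hd h2 = u1"
    using hc2 by blast+
  have rr: "r1 = r2" using assms(8) unfolding r1_def r2_def .
  have "h1 = h2"
  proof (cases "r1 = []")
    case True
    then have e1: "h1 = w1" and e2: "h2 = w2" using w1 w2 rr by auto
    have i1: "img st w1 = (if st then w1 else iS w1)" and i2: "img st w2 = (if st then w2 else iS w2)"
      using True rr unfolding img_def r1_def r2_def by auto
    show ?thesis
    proof (cases st)
      case True then show ?thesis using i1 i2 assms(7) e1 e2 by simp
    next
      case False
      have "iS w1 = iS w2" using i1 i2 assms(7) False by simp
      moreover have "w1 \<in> {h. hH V Bo E1 h \<and> hd h = u1}" "w2 \<in> {h. hH V Bo E1 h \<and> hd h = u1}"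
        using hh1 hh2 sth1 sth2 e1 e2 False by auto
      ultimately show ?thesis using iSinj e1 e2 unfolding inj_on_def by blast
    qed
  next
    case False
    then have F2: "r2 \<noteq> []" using rr by simp
    have dne1: "dropWhile (\<lambda>v. v \<notin> Bo) w1 \<noteq> []" using False unfolding r1_def .
    have dne2: "dropWhile (\<lambda>v. v \<notin> Bo) w2 \<noteq> []" using F2 unfolding r2_def .
    have i1: "img st w1 = (if st then rev (iS (rev h1)) else iC h1)"
      unfolding img_def h1_def by (rule if_not_P[OF dne1])
    have i2: "img st w2 = (if st then rev (iS (rev h2)) else iC h2)"
      unfolding img_def h2_def by (rule if_not_P[OF dne2])
    have l1: "last h1 = u1" and l2: "last h2 = u1" using rr1 rr2 False F2 by auto
    show ?thesis
    proof (cases st)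
      case True
      have "iS (rev h1) = iS (rev h2)" using i1 i2 assms(7) True by simp
      moreover have "rev h1 \<in> {h. hH V Bo E1 h \<and> hd h = u1}" "rev h2 \<in> {h. hH V Bo E1 h \<and> hd h = u1}"
        using hh1 hh2 l1 l2 hH_rev by (auto simp: hd_rev)
      ultimately have "rev h1 = rev h2" using iSinj unfolding inj_on_def by blast
      then show ?thesis by simp
    next
      case st: False
      have "iC h1 = iC h2" using i1 i2 assms(7) st by simp
      moreover have "h1 \<in> {h. hH V Bo E1 h \<and> hd h = u1 \<and> last h = u1}" "h2 \<in> {h. hH V Bo E1 h \<and> hd h = u1 \<and> last h = u1}"
        using hh1 hh2 l1 l2 sth1 sth2 st by auto
      ultimately show ?thesis using iCinj unfolding inj_on_def by blast
    qed
  qed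
  then show ?thesis using w1 w2 rr by simp
qed

lemma glue_inj: "Dm st w1 \<Longrightarrow> Dm st w2 \<Longrightarrow> G st w1 = G st w2 \<Longrightarrow> w1 = w2"
proof (induction "length w1" arbitrary: st w1 w2 rule: less_induct)
  case less
  have len: "length w1 = length w2" using glue_ok[OF less.prems(1)] glue_ok[OF less.prems(2)] less.prems(3) by metis
  show ?case
  proof (cases "w1 = []")
    case True then show ?thesis using len by simp
  next
    case ne1: False
    then have ne2: "w2 \<noteq> []" using len by auto
    have gok1: "hd w1 \<in> Bo \<longrightarrow> hd (G st w1) = hd w1" "hd w1 \<notin> Bo \<longrightarrow> hd (G st w1) \<notin> Bo"
      using glue_ok[OF less.prems(1)] ne1 by blast+
    have gok2: "hd w2 \<in> Bo \<longrightarrow> hd (G st w2) = hd w2" "hd w2 \<notin> Bo \<longrightarrow> hd (G st w2) \<notin> Bo"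
      using glue_ok[OF less.prems(2)] ne2 by blast+
    have same: "hd w1 \<in> Bo \<longleftrightarrow> hd w2 \<in> Bo" using gok1 gok2 less.prems(3) by metis
    show ?thesis
    proof (cases "hd w1 \<in> Bo")
      case True
      then have T2: "hd w2 \<in> Bo" using same by simp
      note d1 = Bo_dec[OF less.prems(1) ne1 True] and d2 = Bo_dec[OF less.prems(2) ne2 T2]
      have s1: "takeWhile (\<lambda>v. v \<in> Bo) (G st w1) = takeWhile (\<lambda>v. v \<in> Bo) w1 \<and>
                dropWhile (\<lambda>v. v \<in> Bo) (G st w1) = G False (dropWhile (\<lambda>v. v \<in> Bo) w1)"
        using d1 tw_dw_split[of "takeWhile (\<lambda>v. v \<in> Bo) w1" "\<lambda>v. v \<in> Bo"] by metis
      have s2: "takeWhile (\<lambda>v. v \<in> Bo) (G st w2) = takeWhile (\<lambda>v. v \<in> Bo) w2 \<and>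
                dropWhile (\<lambda>v. v \<in> Bo) (G st w2) = G False (dropWhile (\<lambda>v. v \<in> Bo) w2)"
        using d2 tw_dw_split[of "takeWhile (\<lambda>v. v \<in> Bo) w2" "\<lambda>v. v \<in> Bo"] by metis
      have tt: "takeWhile (\<lambda>v. v \<in> Bo) w1 = takeWhile (\<lambda>v. v \<in> Bo) w2" using s1 s2 less.prems(3) by metis
      have "G False (dropWhile (\<lambda>v. v \<in> Bo) w1) = G False (dropWhile (\<lambda>v. v \<in> Bo) w2)"
        using s1 s2 less.prems(3) by metis
      then have "dropWhile (\<lambda>v. v \<in> Bo) w1 = dropWhile (\<lambda>v. v \<in> Bo) w2"
        using less.hyps d1 d2 by blast
      then show ?thesis using tt by (metis takeWhile_dropWhile_id)
    next
      case False
      then have F2: "hd w2 \<notin> Bo" using same by simp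
      note d1 = H_dec[OF less.prems(1) ne1 False] and d2 = H_dec[OF less.prems(2) ne2 F2]
      have s1: "takeWhile (\<lambda>v. v \<notin> Bo) (G st w1) = img st w1 \<and>
                dropWhile (\<lambda>v. v \<notin> Bo) (G st w1) = G False (dropWhile (\<lambda>v. v \<notin> Bo) w1)"
        using d1 tw_dw_split[of "img st w1" "\<lambda>v. v \<notin> Bo"] by metis
      have s2: "takeWhile (\<lambda>v. v \<notin> Bo) (G st w2) = img st w2 \<and>
                dropWhile (\<lambda>v. v \<notin> Bo) (G st w2) = G False (dropWhile (\<lambda>v. v \<notin> Bo) w2)"
        using d2 tw_dw_split[of "img st w2" "\<lambda>v. v \<notin> Bo"] by metis
      have ii: "img st w1 = img st w2" using s1 s2 less.prems(3) by metis
      have "G False (dropWhile (\<lambda>v. v \<notin> Bo) w1) = G False (dropWhile (\<lambda>v. v \<notin> Bo) w2)"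
        using s1 s2 less.prems(3) by metis
      then have "dropWhile (\<lambda>v. v \<notin> Bo) w1 = dropWhile (\<lambda>v. v \<notin> Bo) w2"
        using less.hyps d1 d2 by blast
      then show ?thesis using img_inj[OF less.prems(1) ne1 False less.prems(2) ne2 F2 ii] by blast
    qed
  qed
qed

lemma glue_card:
  assumes "finite V"
  shows "card {w. w \<noteq> [] \<and> set w \<subseteq> V \<and> successively (\<lambda>p q. {p,q} \<in> E1) w \<and> length w = n}
       \<le> card {w. w \<noteq> [] \<and> set w \<subseteq> V \<and> successively (\<lambda>p q. {p,q} \<in> E2) w \<and> length w = n}"
proof (rule card_inj_on_le)
  let ?A = "{w. w \<noteq> [] \<and> set w \<subseteq> V \<and> successively (\<lambda>p q. {p,q} \<in> E1) w \<and> length w = n}"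
  let ?B = "{w. w \<noteq> [] \<and> set w \<subseteq> V \<and> successively (\<lambda>p q. {p,q} \<in> E2) w \<and> length w = n}"
  have D: "Dm True w" if "w \<in> ?A" for w using that unfolding Dm_def by auto
  show "inj_on (G True) ?A" using glue_inj D unfolding inj_on_def by blast
  show "G True ` ?A \<subseteq> ?B"
  proof
    fix g assume "g \<in> G True ` ?A"
    then obtain w where w: "w \<in> ?A" "g = G True w" by blast
    note ok = glue_ok[OF D[OF w(1)]]
    show "g \<in> ?B" using ok w by auto
  qed
  show "finite ?B"
    by (rule finite_subset[OF _ finite_lists_length_eq[OF assms, of n]]) auto
qed

end



lemma is_walk_succ: "is_walk V E ws \<longleftrightarrow> ws \<noteq> [] \<and> set ws \<subseteq> V \<and> successively (\<lambda>p q. {p,q} \<in> E) ws"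
  unfolding is_walk_def successively_conv_nth by blast

lemma sg_edge: "simple_graph V E \<Longrightarrow> {p,q} \<in> E \<Longrightarrow> p \<noteq> q \<and> p \<in> V \<and> q \<in> V"
  unfolding simple_graph_def by (metis doubleton_eq_iff insert_absorb2 singleton_insert_inj_eq)

lemma walk_path:
  "w \<noteq> [] \<Longrightarrow> successively (\<lambda>p q. {p,q} \<in> E) w \<Longrightarrow>
   \<exists>w'. w' \<noteq> [] \<and> successively (\<lambda>p q. {p,q} \<in> E) w' \<and> distinct w' \<and> hd w' = hd w \<and> last w' = last w \<and> set w' \<subseteq> set w"
proof (induction "length w" arbitrary: w rule: less_induct)
  case less
  show ?case
  proof (cases "distinct w")
    case True then show ?thesis using less.prems by blast
  next
    case False
    then obtain xs ys zs a where w: "w = xs @ [a] @ ys @ [a] @ zs" using not_distinct_decomp by blast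
    define w2 where "w2 = xs @ [a] @ zs"
    have s: "successively (\<lambda>p q. {p,q} \<in> E) xs" "successively (\<lambda>p q. {p,q} \<in> E) zs"
      "xs = [] \<or> {last xs, a} \<in> E" "zs = [] \<or> {a, hd zs} \<in> E"
      using less.prems(2) unfolding w by (auto simp: successively_append_iff successively_Cons)
    have s2: "successively (\<lambda>p q. {p,q} \<in> E) w2" unfolding w2_def using s
      by (auto simp: successively_append_iff successively_Cons)
    have l: "length w2 < length w" unfolding w w2_def by simp
    have ne: "w2 \<noteq> []" unfolding w2_def by simp
    obtain w' where w': "w' \<noteq> []" "successively (\<lambda>p q. {p,q} \<in> E) w'" "distinct w'" "hd w' = hd w2"
      "last w' = last w2" "set w' \<subseteq> set w2" using less.hyps[OF l ne s2] by blast
    have "hd w2 = hd w" unfolding w w2_def by (cases xs) auto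
    moreover have "last w2 = last w" unfolding w w2_def by (cases zs) auto
    moreover have "set w2 \<subseteq> set w" unfolding w w2_def by auto
    ultimately have "hd w' = hd w \<and> last w' = last w \<and> set w' \<subseteq> set w" using w' by simp
    then show ?thesis using w'(1,2,3) by blast
  qed
qed

lemma no_cycle_nb:
  assumes "tree V E" "y \<in> V" "{y,b} \<in> E" "{y,c} \<in> E" "b \<noteq> c"
    and "w \<noteq> []" "set w \<subseteq> V" "successively (\<lambda>p q. {p,q} \<in> E) w" "hd w = b" "last w = c" "y \<notin> set w"
  shows False
proof -
  obtain w' where w': "w' \<noteq> []" "successively (\<lambda>p q. {p,q} \<in> E) w'" "distinct w'" "hd w' = b"
      "last w' = c" "set w' \<subseteq> set w" using walk_path[OF assms(6,8)] assms(9,10) by metis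
  have "length w' \<noteq> 1" using w' assms(5) by (cases w') auto
  moreover have "length w' \<noteq> 0" using w'(1) by simp
  ultimately have l: "length (y # w') \<ge> 3" by (simp only: length_Cons)
  have "is_walk V E (y # w')" unfolding is_walk_succ using w' assms
    by (auto simp: successively_Cons)
  moreover have "distinct (y # w')" using w' assms(11) by auto
  moreover have "{last (y # w'), hd (y # w')} \<in> E" using w' assms(4) by (simp add: insert_commute)
  ultimately have "is_cycle V E (y # w')" using l unfolding is_cycle_def is_path_def by blast
  then show False using assms(1) unfolding tree_def by blast
qed

locale kcset =
  fixes V :: "'a set" and E :: "'a set set" and x y :: 'a and P :: "'a list"
  assumes tr: "tree V E" and xV: "x \<in> V" and yV: "y \<in> V" and xy: "x \<noteq> y"
    and pth: "is_path V E P" and hdP: "hd P = x" and lastP: "last P = y"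
    and deg: "\<forall>v \<in> set P - {x, y}. degree E v = 2"
begin

definition "k = length P - 1"
definition "z = P ! (k - 1)"
definition "NB = neighbours E y - {z}"
definition "Bo = {c. \<exists>b\<in>NB. \<exists>w. w \<noteq> [] \<and> set w \<subseteq> V \<and> successively (\<lambda>p q. {p,q} \<in> E) w \<and> hd w = b \<and> last w = c \<and> y \<notin> set w}"

lemma sg: "simple_graph V E" using tr tree_def by blast
lemma edge: "{p,q} \<in> E \<Longrightarrow> p \<noteq> q \<and> p \<in> V \<and> q \<in> V" using sg_edge[OF sg] .

lemma Pbasic: "length P \<ge> 2" "k \<ge> 1" "P ! 0 = x" "P ! k = y" "distinct P" "set P \<subseteq> V"
  "length P = Suc k"
proof -
  have ne: "P \<noteq> []" and d: "distinct P" and sP: "set P \<subseteq> V" using pth unfolding is_path_def is_walk_def by auto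
  show "P ! 0 = x" using ne hdP by (simp add: hd_conv_nth)
  show "length P \<ge> 2"
  proof (rule ccontr)
    assume a: "\<not> 2 \<le> length P"
    have "0 < length P" using ne by simp
    then have "length P = 1" using a by linarith
    then have "hd P = last P" using ne by (cases P) auto
    then show False using hdP lastP xy by simp
  qed
  then show "k \<ge> 1" "length P = Suc k" unfolding k_def by auto
  show "P ! k = y" using ne lastP unfolding k_def by (simp add: last_conv_nth)
  show "distinct P" "set P \<subseteq> V" using d sP by auto
qed

lemma Pedge: "i < k \<Longrightarrow> {P ! i, P ! Suc i} \<in> E"
  using pth Pbasic unfolding is_path_def is_walk_def by auto

lemma PV: "i \<le> k \<Longrightarrow> P ! i \<in> V" using Pbasic by (metis le_imp_less_Suc nth_mem subsetD)

lemma Pinj: "i \<le> k \<Longrightarrow> j \<le> k \<Longrightarrow> P ! i = P ! j \<longleftrightarrow> i = j"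
  using Pbasic nth_eq_iff_index_eq by (metis le_imp_less_Suc)

lemma zk: "z = P ! (k - 1)" "Suc (k - 1) = k" using z_def Pbasic by auto

lemma yz: "{y, z} \<in> E" using Pedge[of "k - 1"] zk Pbasic by (simp add: insert_commute)

lemma interior_nb:
  assumes "0 < i" "i < k"
  shows "neighbours E (P ! i) = {P ! (i - 1), P ! Suc i}"
proof -
  have "P ! i \<in> set P - {x, y}" using assms Pbasic Pinj[of i 0] Pinj[of i k]
    by (auto intro!: nth_mem)
  then have c: "card (neighbours E (P ! i)) = 2" using deg unfolding degree_def by blast
  have a: "P ! (i - 1) \<in> neighbours E (P ! i)" using Pedge[of "i - 1"] assms
    unfolding neighbours_def by (simp add: insert_commute)
  have b: "P ! Suc i \<in> neighbours E (P ! i)" using Pedge[of i] assms unfolding neighbours_def by simp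
  have ab: "P ! (i - 1) \<noteq> P ! Suc i" using Pinj[of "i - 1" "Suc i"] assms by simp
  obtain u v where uv: "neighbours E (P ! i) = {u, v}" "u \<noteq> v" using c card_2_iff by metis
  show ?thesis using a b ab uv by auto
qed

lemma NB_nb: "b \<in> NB \<Longrightarrow> {y, b} \<in> E \<and> b \<noteq> z" unfolding NB_def neighbours_def by auto

lemma NB_Bo: "NB \<subseteq> Bo"
proof
  fix b assume b: "b \<in> NB"
  then have "{y,b} \<in> E" "b \<noteq> y" using NB_nb edge by blast+
  then have "b \<in> V" using edge by blast
  then show "b \<in> Bo" unfolding Bo_def using b \<open>b \<noteq> y\<close> by (rule_tac CollectI, rule_tac bexI[of _ b], rule_tac exI[of _ "[b]"]) auto
qed

lemma Bo_V: "Bo \<subseteq> V" unfolding Bo_def by auto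

lemma Bo_walk: "c \<in> Bo \<Longrightarrow> \<exists>b\<in>NB. \<exists>w. w \<noteq> [] \<and> set w \<subseteq> V \<and> successively (\<lambda>p q. {p,q} \<in> E) w \<and> hd w = b \<and> last w = c \<and> y \<notin> set w"
  unfolding Bo_def by blast

lemma y_Bo: "y \<notin> Bo"
proof
  assume "y \<in> Bo"
  then obtain w where "w \<noteq> []" "last w = y" "y \<notin> set w" using Bo_walk by blast
  then show False using last_in_set by fastforce
qed

lemma z_Bo: "z \<notin> Bo"
proof
  assume "z \<in> Bo"
  then obtain b w where "b \<in> NB" "w \<noteq> []" "set w \<subseteq> V" "successively (\<lambda>p q. {p,q} \<in> E) w" "hd w = b" "last w = z" "y \<notin> set w"
    using Bo_walk by blast
  then show False using no_cycle_nb[OF tr yV _ yz] NB_nb by metis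
qed

lemma P_Bo: "i \<le> k \<Longrightarrow> P ! i \<notin> Bo"
proof
  assume i: "i \<le> k" and c: "P ! i \<in> Bo"
  show False
  proof (cases "i = k")
    case True then show False using c y_Bo Pbasic by simp
  next
    case False
    then have ik: "i \<le> k - 1" using i by simp
    obtain b w where bw: "b \<in> NB" "w \<noteq> []" "set w \<subseteq> V" "successively (\<lambda>p q. {p,q} \<in> E) w" "hd w = b"
      "last w = P ! i" "y \<notin> set w" using Bo_walk[OF c] by blast
    define seg where "seg = drop (Suc i) (take k P)"
    have tk: "take k P = take (Suc i) (take k P) @ seg" unfolding seg_def by (rule append_take_drop_id[symmetric])
    have sP: "successively (\<lambda>p q. {p,q} \<in> E) P" using pth unfolding is_path_def is_walk_succ by blast
    have stk: "successively (\<lambda>p q. {p,q} \<in> E) (take k P)"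
      using sP by (metis append_take_drop_id successively_append_iff)
    have ltk: "length (take k P) = k" using Pbasic by simp
    define w2 where "w2 = w @ seg"
    have lastseg: "seg \<noteq> [] \<Longrightarrow> last seg = z"
    proof -
      assume sne: "seg \<noteq> []"
      then have "Suc i < k" using ltk unfolding seg_def by simp
      then have e: "Suc (k - 2) = k - 1" by arith
      show ?thesis unfolding seg_def zk using ltk Pbasic ik sne e
        by (simp add: last_conv_nth seg_def)
    qed
    have hdseg: "seg \<noteq> [] \<Longrightarrow> hd seg = P ! Suc i"
      unfolding seg_def using ltk ik by (simp add: hd_conv_nth)
    have sseg: "successively (\<lambda>p q. {p,q} \<in> E) seg"
      using stk tk by (metis successively_append_iff)
    have "successively (\<lambda>p q. {p,q} \<in> E) w2" unfolding w2_def successively_append_iff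
    proof (intro conjI)
      show "w = [] \<or> seg = [] \<or> {last w, hd seg} \<in> E"
      proof (cases "seg = []")
        case False
        then have "Suc i < k" using ltk unfolding seg_def by simp
        then show ?thesis using bw(6) hdseg[OF False] Pedge[of i] by simp
      qed simp
    qed (use bw sseg in auto)
    moreover have "last w2 = z"
    proof (cases "seg = []")
      case True
      then have "Suc i \<ge> k" using ltk unfolding seg_def by simp
      then have "i = k - 1" using ik by simp
      then show ?thesis using True bw(6) zk unfolding w2_def by simp
    next
      case False then show ?thesis using lastseg unfolding w2_def by simp
    qed
    moreover have "y \<notin> set seg"
    proof
      assume "y \<in> set seg"
      then have "y \<in> set (take k P)" unfolding seg_def by (meson in_set_dropD)
      then obtain j where "j < k" "P ! j = y" using ltk by (metis in_set_conv_nth nth_take)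
      then show False using Pinj[of j k] Pbasic by simp
    qed
    moreover have "set seg \<subseteq> V" unfolding seg_def using Pbasic by (meson in_set_dropD in_set_takeD subsetD subsetI)
    ultimately have "w2 \<noteq> [] \<and> set w2 \<subseteq> V \<and> successively (\<lambda>p q. {p,q} \<in> E) w2 \<and> hd w2 = b \<and> last w2 = z \<and> y \<notin> set w2"
      using bw unfolding w2_def by auto
    then show False using no_cycle_nb[OF tr yV _ yz] NB_nb[OF bw(1)] by metis
  qed
qed

lemma x_Bo: "x \<notin> Bo" using P_Bo[of 0] Pbasic by simp

lemma cross: "{p,q} \<in> E \<Longrightarrow> p \<in> Bo \<Longrightarrow> q \<notin> Bo \<Longrightarrow> q = y \<and> p \<in> NB"
proof -
  assume e: "{p,q} \<in> E" and p: "p \<in> Bo" and q: "q \<notin> Bo"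
  have qy: "q = y"
  proof (rule ccontr)
    assume qy: "q \<noteq> y"
    obtain b w where bw: "b \<in> NB" "w \<noteq> []" "set w \<subseteq> V" "successively (\<lambda>p q. {p,q} \<in> E) w" "hd w = b"
      "last w = p" "y \<notin> set w" using Bo_walk[OF p] by blast
    have "w @ [q] \<noteq> [] \<and> set (w @ [q]) \<subseteq> V \<and> successively (\<lambda>p q. {p,q} \<in> E) (w @ [q]) \<and> hd (w @ [q]) = b
      \<and> last (w @ [q]) = q \<and> y \<notin> set (w @ [q])"
      using bw e edge qy by (auto simp: successively_append_iff)
    then have "q \<in> Bo" unfolding Bo_def using bw(1) by blast
    then show False using q by simp
  qed
  have "p \<noteq> z" using p z_Bo by auto
  moreover have "p \<in> neighbours E y" using e qy unfolding neighbours_def by (simp add: insert_commute)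
  ultimately show ?thesis using qy NB_def by auto
qed

definition "E' = kc_transform E x y z"

lemma kc_mem: "e \<in> E' \<longleftrightarrow> (e \<in> E \<and> (\<forall>w\<in>NB. e \<noteq> {y,w})) \<or> (\<exists>w\<in>NB. e = {x,w})"
  unfolding E'_def kc_transform_def NB_def by blast

lemma A1': "p \<notin> Bo \<Longrightarrow> q \<notin> Bo \<Longrightarrow> {p,q} \<in> E \<Longrightarrow> {p,q} \<in> E'"
  unfolding kc_mem using NB_Bo by (auto simp: doubleton_eq_iff)

lemma A2': "p \<in> Bo \<Longrightarrow> q \<in> Bo \<Longrightarrow> {p,q} \<in> E \<Longrightarrow> {p,q} \<in> E'"
  unfolding kc_mem using y_Bo by (auto simp: doubleton_eq_iff)

lemma A3': "p \<notin> Bo \<Longrightarrow> q \<in> Bo \<Longrightarrow> {p,q} \<in> E \<Longrightarrow> p = y \<and> {x,q} \<in> E'"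
proof -
  assume a: "p \<notin> Bo" "q \<in> Bo" "{p,q} \<in> E"
  then have "p = y \<and> q \<in> NB" using cross[of q p] by (simp add: insert_commute)
  then show ?thesis unfolding kc_mem by blast
qed

lemma nbrH:
  assumes "1 \<le> i" "i \<le> k" "{P ! i, q} \<in> E" "q \<notin> Bo"
  shows "q = P ! (i - 1) \<or> (i < k \<and> q = P ! Suc i)"
proof (cases "i < k")
  case True
  then have "q \<in> {P ! (i - 1), P ! Suc i}" using interior_nb[of i] assms unfolding neighbours_def by auto
  then show ?thesis using True by auto
next
  case False
  then have ik: "i = k" using assms by simp
  have "q \<in> neighbours E y" using assms(3) ik Pbasic unfolding neighbours_def by simp
  moreover have "q \<notin> NB" using assms(4) NB_Bo by auto
  ultimately have "q = z" unfolding NB_def by auto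
  then show ?thesis using ik zk by simp
qed

lemma HV: "i \<le> k \<Longrightarrow> P ! i \<in> V - Bo" using PV P_Bo by simp

lemma nb_exists: "p \<in> V - Bo \<Longrightarrow> \<exists>q. q \<in> V - Bo \<and> {p,q} \<in> E"
proof -
  assume p: "p \<in> V - Bo"
  show ?thesis
  proof (cases "p = x")
    case True
    then show ?thesis using Pedge[of 0] Pbasic HV[of 1] by auto
  next
    case False
    obtain ws where ws: "is_walk V E ws" "hd ws = p" "last ws = x"
      using tr p xV unfolding tree_def connected_graph_def by blast
    have "length ws \<noteq> 1" using ws False by (cases ws) auto
    moreover have "ws \<noteq> []" using ws is_walk_def by blast
    ultimately have "Suc 0 < length ws" by (cases ws) auto
    then have e: "{p, ws ! 1} \<in> E" using ws unfolding is_walk_def by (metis One_nat_def hd_conv_nth list.size(3) not_less_zero)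
    show ?thesis
    proof (cases "ws ! 1 \<in> Bo")
      case True
      then have "p = y" using cross[of "ws ! 1" p] e p by (simp add: insert_commute)
      then show ?thesis using yz zk HV[of "k - 1"] by auto
    next
      case False then show ?thesis using e edge by blast
    qed
  qed
qed

definition "hasA \<longleftrightarrow> (\<exists>a. {x,a} \<in> E \<and> a \<notin> Bo \<and> a \<noteq> P ! 1)"

lemma a_notP: assumes "{x,a} \<in> E" "a \<notin> Bo" "a \<noteq> P ! 1" shows "a \<notin> set P"
proof
  assume "a \<in> set P"
  then obtain j where j: "j \<le> k" "a = P ! j" using Pbasic by (metis in_set_conv_nth less_Suc_eq_le)
  show False
  proof (cases "j = 0")
    case True then show False using edge[OF assms(1)] j Pbasic by auto
  next
    case j0: False
    show False
    proof (cases "j < k")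
      case True
      have "j \<noteq> 1" using j assms(3) by auto
      then have "x \<in> {P ! (j - 1), P ! Suc j}" using interior_nb[of j] True j0 j assms(1)
        unfolding neighbours_def by (auto simp: insert_commute)
      then show False using Pinj[of 0 "j - 1"] Pinj[of 0 "Suc j"] Pbasic True j0 \<open>j \<noteq> 1\<close> by auto
    next
      case False
      then have jk: "j = k" using j by simp
      then have "k \<noteq> 1" using assms(3) j by auto
      then have "x \<noteq> z" using Pinj[of 0 "k - 1"] Pbasic zk by auto
      moreover have "x \<in> neighbours E y" using assms(1) j jk Pbasic unfolding neighbours_def by (simp add: insert_commute)
      ultimately have "x \<in> NB" unfolding NB_def by simp
      then show False using NB_Bo x_Bo by auto
    qed
  qed
qed

lemma noA_clos: "\<not> hasA \<Longrightarrow> p \<in> set P \<Longrightarrow> {p,q} \<in> E \<Longrightarrow> q \<notin> Bo \<Longrightarrow> q \<in> set P"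
proof -
  assume nA: "\<not> hasA" and p: "p \<in> set P" and e: "{p,q} \<in> E" and q: "q \<notin> Bo"
  obtain i where i: "i \<le> k" "p = P ! i" using p Pbasic by (metis in_set_conv_nth less_Suc_eq_le)
  show "q \<in> set P"
  proof (cases "i = 0")
    case True
    then have "q = P ! 1" using nA e q i Pbasic unfolding hasA_def by auto
    then show ?thesis using Pbasic by auto
  next
    case False
    then have "q = P ! (i - 1) \<or> (i < k \<and> q = P ! Suc i)" using nbrH[of i q] i e q by simp
    then show ?thesis using Pbasic i by auto
  qed
qed

lemma rho_nth: "length Q = length P \<Longrightarrow> i \<le> k \<Longrightarrow> the (map_of (zip P Q) (P ! i)) = Q ! i"
  using map_of_zip_nth[of P Q i] Pbasic by simp

lemma revP_nth: "i \<le> k \<Longrightarrow> rev P ! i = P ! (k - i)"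
  using Pbasic by (simp add: rev_nth)

lemma Qodd_nth: "i < k \<Longrightarrow> (rev (butlast P) @ [a]) ! i = P ! (k - 1 - i)"
  "(rev (butlast P) @ [a]) ! k = a" "length (rev (butlast P) @ [a]) = length P"
proof -
  have lb: "length (butlast P) = k" using Pbasic by simp
  show "i < k \<Longrightarrow> (rev (butlast P) @ [a]) ! i = P ! (k - 1 - i)"
    using lb by (simp add: nth_append rev_nth nth_butlast)
  show "(rev (butlast P) @ [a]) ! k = a" using lb by (simp add: nth_append)
  show "length (rev (butlast P) @ [a]) = length P" using lb Pbasic by simp
qed

definition "idx p = (THE i. i \<le> k \<and> P ! i = p)"

lemma idx_nth: "i \<le> k \<Longrightarrow> idx (P ! i) = i"
  unfolding idx_def by (rule the_equality) (use Pinj in auto)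

lemma adjP:
  assumes "i \<le> k" "j \<le> k" "{P ! i, P ! j} \<in> E"
  shows "j = Suc i \<or> i = Suc j"
proof (cases "i = 0")
  case False
  then have "P ! j = P ! (i - 1) \<or> (i < k \<and> P ! j = P ! Suc i)" using nbrH[of i "P ! j"] assms P_Bo by simp
  then show ?thesis using Pinj[of j "i - 1"] Pinj[of j "Suc i"] assms False by auto
next
  case True
  have "j \<noteq> 0"
  proof
    assume "j = 0" then show False using edge[OF assms(3)] True by simp
  qed
  then have "P ! i = P ! (j - 1) \<or> (j < k \<and> P ! i = P ! Suc j)" using nbrH[of j "P ! i"] assms P_Bo
    by (simp add: insert_commute)
  then show ?thesis using Pinj[of i "j - 1"] Pinj[of i "Suc j"] assms True \<open>j \<noteq> 0\<close> by auto
qed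

lemma refl_inst:
  assumes mik: "mi \<le> k"
    and fadj: "\<And>i. mi \<le> i \<Longrightarrow> i < k \<Longrightarrow> {f i, f (Suc i)} \<in> E"
    and finj: "inj_on f {mi..k}"
    and fm: "f mi = P ! mi"
    and fnm: "\<And>i. mi < i \<Longrightarrow> i \<le> k \<Longrightarrow> f i \<noteq> P ! mi"
    and fH: "\<And>i. mi \<le> i \<Longrightarrow> i \<le> k \<Longrightarrow> f i \<in> V - Bo"
  shows "reflp (\<lambda>p q. {p,q} \<in> E) (V - Bo) {P ! i |i. mi < i \<and> i \<le> k} (P ! mi) (\<lambda>p. f (idx p))"
proof -
  let ?Y = "{P ! i |i. mi < i \<and> i \<le> k}"
  have Ym: "p \<in> ?Y \<union> {P ! mi} \<longleftrightarrow> (\<exists>i. p = P ! i \<and> mi \<le> i \<and> i \<le> k)" for p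
    using mik by (auto simp: le_less)
  show ?thesis
  proof
    show "{p,q} \<in> E \<Longrightarrow> {q,p} \<in> E" for p q by (simp add: insert_commute)
    show "q \<in> ?Y \<or> q = P ! mi" if as: "p \<in> ?Y" "{p,q} \<in> E" "q \<in> V - Bo" for p q
    proof -
      obtain i where i: "p = P ! i" "mi < i" "i \<le> k" using as(1) by blast
      have "q = P ! (i - 1) \<or> (i < k \<and> q = P ! Suc i)" using nbrH[of i q] i as by simp
      then show ?thesis using i by (cases "i - 1 = mi") auto
    qed
    show "{f (idx p), f (idx q)} \<in> E" if as: "p \<in> ?Y \<union> {P ! mi}" "q \<in> ?Y \<union> {P ! mi}" "{p,q} \<in> E" for p q
    proof -
      obtain i where i: "p = P ! i" "mi \<le> i" "i \<le> k" using as(1) Ym by blast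
      obtain j where j: "q = P ! j" "mi \<le> j" "j \<le> k" using as(2) Ym by blast
      have "j = Suc i \<or> i = Suc j" using adjP i j as(3) by simp
      then show ?thesis
      proof
        assume "j = Suc i" then show ?thesis using fadj[of i] i j idx_nth by simp
      next
        assume "i = Suc j" then show ?thesis using fadj[of j] i j idx_nth by (simp add: insert_commute)
      qed
    qed
    show "f (idx (P ! mi)) = P ! mi" using idx_nth mik fm by simp
    show "inj_on (\<lambda>p. f (idx p)) (?Y \<union> {P ! mi})"
    proof (rule inj_onI)
      fix p q assume "p \<in> ?Y \<union> {P ! mi}" "q \<in> ?Y \<union> {P ! mi}" and e: "f (idx p) = f (idx q)"
      then obtain i j where i: "p = P ! i" "mi \<le> i" "i \<le> k" and j: "q = P ! j" "mi \<le> j" "j \<le> k"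
        using Ym by blast
      have "f i = f j" using e i j idx_nth by simp
      then have "i = j" using finj i j unfolding inj_on_def by auto
      then show "p = q" using i j by simp
    qed
    show "f (idx p) \<noteq> P ! mi" if "p \<in> ?Y" for p
      using that fnm idx_nth by auto
    show "f (idx p) \<in> V - Bo" if "p \<in> ?Y" for p
      using that fH idx_nth by fastforce
    show "?Y \<subseteq> V - Bo" using HV by auto
    show "P ! mi \<in> V - Bo" using HV mik by simp
  qed
qed

definition Good :: "('a list \<Rightarrow> 'a list) \<Rightarrow> ('a list \<Rightarrow> 'a list) \<Rightarrow> bool" where
  "Good iS iC \<longleftrightarrow>
    (\<forall>h. hH V Bo E h \<and> hd h = y \<longrightarrow> hH V Bo E (iS h) \<and> hd (iS h) = x \<and> length (iS h) = length h)
  \<and> inj_on iS {h. hH V Bo E h \<and> hd h = y}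
  \<and> (\<forall>h. hH V Bo E h \<and> hd h = y \<and> last h = y \<longrightarrow>
       hH V Bo E (iC h) \<and> hd (iC h) = x \<and> last (iC h) = x \<and> length (iC h) = length h)
  \<and> inj_on iC {h. hH V Bo E h \<and> hd h = y \<and> last h = y}"

lemma Good_even:
  assumes ev: "even k"
  shows "\<exists>iS iC. Good iS iC"
proof -
  define mi where "mi = k div 2"
  define f where "f = (\<lambda>i. P ! (k - i))"
  have k2: "k = 2 * mi" using ev mi_def by simp
  have mik: "mi < k" using k2 Pbasic by simp
  have inst: "reflp (\<lambda>p q. {p,q} \<in> E) (V - Bo) {P ! i |i. mi < i \<and> i \<le> k} (P ! mi) (\<lambda>p. f (idx p))"
  proof (rule refl_inst)
    show "mi \<le> k" using mik by simp
    show "{f i, f (Suc i)} \<in> E" if "mi \<le> i" "i < k" for i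
    proof -
      have "Suc (k - Suc i) = k - i" using that by simp
      then show ?thesis using Pedge[of "k - Suc i"] that unfolding f_def by (simp add: insert_commute)
    qed
    show "inj_on f {mi..k}" unfolding f_def inj_on_def using Pinj by auto
    show "f mi = P ! mi" unfolding f_def using k2 by simp
    show "f i \<noteq> P ! mi" if "mi < i" "i \<le> k" for i unfolding f_def using Pinj[of "k - i" mi] that k2 by simp
    show "f i \<in> V - Bo" if "mi \<le> i" "i \<le> k" for i unfolding f_def using HV by simp
  qed
  interpret R: reflp "\<lambda>p q. {p,q} \<in> E" "V - Bo" "{P ! i |i. mi < i \<and> i \<le> k}" "P ! mi" "\<lambda>p. f (idx p)"
    by (rule inst)
  have hw: "R.hw w \<longleftrightarrow> hH V Bo E w" for w unfolding R.hw_def hH_def by simp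
  have yY: "y \<in> {P ! i |i. mi < i \<and> i \<le> k} \<union> {P ! mi}" using mik Pbasic by auto
  have fy: "f (idx y) = x" using idx_nth[of k] Pbasic unfolding f_def by simp
  have g1: "\<forall>h. hH V Bo E h \<and> hd h = y \<longrightarrow> hH V Bo E (R.Rf h) \<and> hd (R.Rf h) = x \<and> length (R.Rf h) = length h"
  proof (intro allI impI)
    fix h assume "hH V Bo E h \<and> hd h = y"
    then show "hH V Bo E (R.Rf h) \<and> hd (R.Rf h) = x \<and> length (R.Rf h) = length h"
      using R.Rf_props[of h] yY fy hw by auto
  qed
  have g2: "inj_on R.Rf {h. hH V Bo E h \<and> hd h = y}"
    by (rule inj_on_subset[OF R.Rf_inj]) (use yY hw in auto)
  have g3: "\<forall>h. hH V Bo E h \<and> hd h = y \<and> last h = y \<longrightarrow>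
       hH V Bo E (R.Rc h) \<and> hd (R.Rc h) = x \<and> last (R.Rc h) = x \<and> length (R.Rc h) = length h"
  proof (intro allI impI)
    fix h assume a: "hH V Bo E h \<and> hd h = y \<and> last h = y"
    then show "hH V Bo E (R.Rc h) \<and> hd (R.Rc h) = x \<and> last (R.Rc h) = x \<and> length (R.Rc h) = length h"
      using R.Rc_props[of h y] yY fy hw by auto
  qed
  have g4: "inj_on R.Rc {h. hH V Bo E h \<and> hd h = y \<and> last h = y}"
    using R.Rc_inj[OF yY] hw by simp
  have "Good R.Rf R.Rc" unfolding Good_def using g1 g2 g3 g4 by blast
  then show ?thesis by blast
qed

lemma Pmem: "j \<le> k \<Longrightarrow> P ! j \<in> set P" using Pbasic by (simp add: less_Suc_eq_le)

lemma yk_nb: "{y, q} \<in> E \<Longrightarrow> q \<notin> Bo \<Longrightarrow> q = z"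
  using nbrH[of k q] Pbasic zk by auto

lemma start_dec:
  assumes "hH V Bo E h" "hd h = y" "tl h \<noteq> []"
  shows "h = y # tl h \<and> hH V Bo E (tl h) \<and> hd (tl h) = z"
proof -
  have h: "h = y # tl h" using assms by (cases h) auto
  have s: "successively (\<lambda>p q. {p,q} \<in> E) (y # tl h)" "set (y # tl h) \<subseteq> V - Bo"
    using assms(1) h unfolding hH_def by metis+
  then have "{y, hd (tl h)} \<in> E" "successively (\<lambda>p q. {p,q} \<in> E) (tl h)" using assms(3) by (auto simp: successively_Cons)
  moreover have "hd (tl h) \<notin> Bo" using s(2) assms(3) by (cases "tl h") auto
  moreover have "set (tl h) \<subseteq> V - Bo" using s(2) by simp
  ultimately show ?thesis using h yk_nb assms(3) unfolding hH_def by auto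
qed

lemma closed_dec:
  assumes "hH V Bo E h" "hd h = y" "last h = y" "tl h \<noteq> []"
  shows "h = y # butlast (tl h) @ [y] \<and> hH V Bo E (butlast (tl h)) \<and> hd (butlast (tl h)) = z \<and> last (butlast (tl h)) = z"
proof -
  note sd = start_dec[OF assms(1,2,4)]
  define t where "t = tl h"
  define c where "c = butlast t"
  have tne: "t \<noteq> []" using assms t_def by simp
  have lt: "last t = y" using assms(3,4) sd unfolding t_def by (metis last_ConsR)
  have t: "t = c @ [y]" unfolding c_def using tne lt by (metis append_butlast_last_id)
  have st: "successively (\<lambda>p q. {p,q} \<in> E) t" "set t \<subseteq> V - Bo" "hd t = z" using sd unfolding hH_def t_def by auto
  have cne: "c \<noteq> []"
  proof
    assume "c = []"
    then have "t = [y]" using t by simp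
    then have "hd t = y" by simp
    then have "z = y" using st by simp
    then show False using edge[OF yz] by simp
  qed
  have sc: "successively (\<lambda>p q. {p,q} \<in> E) c" "{last c, y} \<in> E"
    using st(1) t cne by (auto simp: successively_append_iff)
  have cH: "set c \<subseteq> V - Bo" using st(2) t by auto
  have "last c \<notin> Bo" using cH last_in_set[OF cne] by auto
  then have "last c = z" using yk_nb sc(2) by (simp add: insert_commute)
  moreover have "hd c = z" using st(3) t cne by simp
  moreover have "h = y # c @ [y]" using sd t unfolding t_def by simp
  ultimately show ?thesis using sc cH cne unfolding hH_def c_def t_def by simp
qed

definition "nbf p = (SOME q. q \<in> V - Bo \<and> {p,q} \<in> E)"

lemma nbf: "p \<in> V - Bo \<Longrightarrow> nbf p \<in> V - Bo \<and> {p, nbf p} \<in> E"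
  unfolding nbf_def using nb_exists someI_ex by (metis (mono_tags, lifting))

lemma xH: "x \<in> V - Bo" using xV x_Bo by simp

lemma Good_oddA:
  assumes od: "odd k" and hA: "hasA"
  shows "\<exists>iS iC. Good iS iC"
proof -
  obtain a where a: "{x,a} \<in> E" "a \<notin> Bo" "a \<noteq> P ! 1" using hA hasA_def by blast
  have anP: "a \<notin> set P" using a_notP a by blast
  have aH: "a \<in> V - Bo" using a edge by blast
  define mi where "mi = k div 2"
  define f where "f = (\<lambda>i. if i < k then P ! (k - 1 - i) else a)"
  have k2: "k = Suc (2 * mi)" using od mi_def by presburger
  have mik: "mi < k" using k2 by simp
  have inst: "reflp (\<lambda>p q. {p,q} \<in> E) (V - Bo) {P ! i |i. mi < i \<and> i \<le> k} (P ! mi) (\<lambda>p. f (idx p))"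
  proof (rule refl_inst)
    show "mi \<le> k" using mik by simp
    show "{f i, f (Suc i)} \<in> E" if "mi \<le> i" "i < k" for i
    proof (cases "Suc i < k")
      case True
      have "Suc (k - 1 - Suc i) = k - 1 - i" using True by simp
      then show ?thesis using Pedge[of "k - 1 - Suc i"] that True unfolding f_def by (simp add: insert_commute)
    next
      case False
      then have "i = k - 1" using that by simp
      then show ?thesis using a that Pbasic unfolding f_def by simp
    qed
    show "inj_on f {mi..k}"
    proof (rule inj_onI)
      fix i j assume i: "i \<in> {mi..k}" and j: "j \<in> {mi..k}" and e: "f i = f j"
      show "i = j"
      proof (cases "i < k"; cases "j < k")
        assume "i < k" "j < k" then show ?thesis using e Pinj[of "k - 1 - i" "k - 1 - j"] unfolding f_def by simp
      next
        assume "i < k" "\<not> j < k" then show ?thesis using e anP Pmem[of "k - 1 - i"] unfolding f_def by simp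
      next
        assume "\<not> i < k" "j < k" then show ?thesis using e anP Pmem[of "k - 1 - j"] unfolding f_def by simp
      next
        assume "\<not> i < k" "\<not> j < k" then show ?thesis using i j by simp
      qed
    qed
    show "f mi = P ! mi" unfolding f_def using k2 mik by simp
    show "f i \<noteq> P ! mi" if "mi < i" "i \<le> k" for i
    proof (cases "i < k")
      case True then show ?thesis unfolding f_def using Pinj[of "k - 1 - i" mi] that k2 by simp
    next
      case False then show ?thesis unfolding f_def using anP Pmem[of mi] mik by auto
    qed
    show "f i \<in> V - Bo" if "mi \<le> i" "i \<le> k" for i unfolding f_def using HV aH by simp
  qed
  interpret R: reflp "\<lambda>p q. {p,q} \<in> E" "V - Bo" "{P ! i |i. mi < i \<and> i \<le> k}" "P ! mi" "\<lambda>p. f (idx p)"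
    by (rule inst)
  have hw: "R.hw w \<longleftrightarrow> hH V Bo E w" for w unfolding R.hw_def hH_def by simp
  have zY: "z \<in> {P ! i |i. mi < i \<and> i \<le> k} \<union> {P ! mi}"
  proof (cases "k - 1 = mi")
    case True then show ?thesis using zk by simp
  next
    case False then show ?thesis using zk k2 by auto
  qed
  have fz: "f (idx z) = x" using idx_nth[of "k - 1"] zk Pbasic unfolding f_def by simp
  define iS where "iS = (\<lambda>h. if tl h = [] then [x] else R.Rf (tl h) @ [nbf (last (R.Rf (tl h)))])"
  define iC where "iC = (\<lambda>h. if tl h = [] then [x] else [x, a] @ R.Rc (butlast (tl h)))"
  have xl: "hH V Bo E [x]" using xH unfolding hH_def by simp
  have hy: "h = [y]" if "hH V Bo E h" "hd h = y" "tl h = []" for h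
    using that unfolding hH_def by (cases h) auto
  have Sprops: "hH V Bo E (R.Rf (tl h)) \<and> hd (R.Rf (tl h)) = x \<and> length (R.Rf (tl h)) = length (tl h)"
    if "hH V Bo E h" "hd h = y" "tl h \<noteq> []" for h
  proof -
    note sd = start_dec[OF that]
    then show ?thesis using R.Rf_props[of "tl h"] zY fz hw by auto
  qed
  have g1: "\<forall>h. hH V Bo E h \<and> hd h = y \<longrightarrow> hH V Bo E (iS h) \<and> hd (iS h) = x \<and> length (iS h) = length h"
  proof (intro allI impI)
    fix h assume hh: "hH V Bo E h \<and> hd h = y"
    show "hH V Bo E (iS h) \<and> hd (iS h) = x \<and> length (iS h) = length h"
    proof (cases "tl h = []")
      case True then show ?thesis using hy[of h] hh xl unfolding iS_def by simp
    next
      case False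
      note sp = Sprops[of h] 
      let ?r = "R.Rf (tl h)"
      have rp: "hH V Bo E ?r" "hd ?r = x" "length ?r = length (tl h)" using sp hh False by auto
      have lr: "last ?r \<in> V - Bo" using rp(1) unfolding hH_def by (metis last_in_set subsetD)
      note nb = nbf[OF lr]
      have "hH V Bo E (?r @ [nbf (last ?r)])" using rp(1) nb unfolding hH_def
        by (auto simp: successively_append_iff)
      moreover have "hd (?r @ [nbf (last ?r)]) = x" using rp unfolding hH_def by simp
      moreover have "length (?r @ [nbf (last ?r)]) = length h" using rp(3) hh False by (cases h) auto
      ultimately show ?thesis using False unfolding iS_def by simp
    qed
  qed
  have g2: "inj_on iS {h. hH V Bo E h \<and> hd h = y}"
  proof (rule inj_onI)
    fix h1 h2 assume h1: "h1 \<in> {h. hH V Bo E h \<and> hd h = y}" and h2: "h2 \<in> {h. hH V Bo E h \<and> hd h = y}"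
      and e: "iS h1 = iS h2"
    have "length (iS h1) = length h1" "length (iS h2) = length h2" using g1 h1 h2 by auto
    then have l: "length h1 = length h2" using e by simp
    show "h1 = h2"
    proof (cases "tl h1 = []")
      case True
      then have "length h1 = 1" using hy[of h1] h1 by simp
      then have "tl h2 = []" using l by (cases h2) auto
      then show ?thesis using hy[of h1] hy[of h2] h1 h2 True by simp
    next
      case False
      then have F2: "tl h2 \<noteq> []" using l by (cases h1; cases h2) auto
      have "R.Rf (tl h1) = R.Rf (tl h2)" using e False F2 unfolding iS_def
        by (metis append1_eq_conv)
      moreover have "tl h1 \<in> {w. R.hw w \<and> hd w \<in> {P ! i |i. mi < i \<and> i \<le> k} \<union> {P ! mi}}"
        using start_dec[of h1] h1 False zY hw by auto
      moreover have "tl h2 \<in> {w. R.hw w \<and> hd w \<in> {P ! i |i. mi < i \<and> i \<le> k} \<union> {P ! mi}}"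
        using start_dec[of h2] h2 F2 zY hw by auto
      ultimately have "tl h1 = tl h2" using R.Rf_inj unfolding inj_on_def by blast
      moreover have "h1 = y # tl h1" using start_dec[of h1] h1 False by blast
      moreover have "h2 = y # tl h2" using start_dec[of h2] h2 F2 by blast
      ultimately show ?thesis by metis
    qed
  qed
  have Cprops: "hH V Bo E (R.Rc (butlast (tl h))) \<and> hd (R.Rc (butlast (tl h))) = x \<and> last (R.Rc (butlast (tl h))) = x
     \<and> length (R.Rc (butlast (tl h))) = length (butlast (tl h))"
    if "hH V Bo E h" "hd h = y" "last h = y" "tl h \<noteq> []" for h
  proof -
    note cd = closed_dec[OF that]
    then show ?thesis using R.Rc_props[of "butlast (tl h)" z] zY fz hw by auto
  qed
  have g3: "\<forall>h. hH V Bo E h \<and> hd h = y \<and> last h = y \<longrightarrow>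
       hH V Bo E (iC h) \<and> hd (iC h) = x \<and> last (iC h) = x \<and> length (iC h) = length h"
  proof (intro allI impI)
    fix h assume hh: "hH V Bo E h \<and> hd h = y \<and> last h = y"
    show "hH V Bo E (iC h) \<and> hd (iC h) = x \<and> last (iC h) = x \<and> length (iC h) = length h"
    proof (cases "tl h = []")
      case True then show ?thesis using hy[of h] hh xl unfolding iC_def by simp
    next
      case False
      let ?c = "butlast (tl h)"
      let ?r = "R.Rc ?c"
      have rp: "hH V Bo E ?r" "hd ?r = x" "last ?r = x" "length ?r = length ?c" using Cprops[of h] hh False by auto
      have cd: "h = y # ?c @ [y]" using closed_dec[of h] hh False by blast
      have rne: "?r \<noteq> []" using rp(1) hH_def by blast
      have "hH V Bo E ([x, a] @ ?r)" using rp(1,2) a aH xH rne unfolding hH_def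
        by (auto simp: successively_append_iff insert_commute successively_Cons)
      moreover have "length ([x, a] @ ?r) = length h" using rp(4) cd by (metis length_Cons length_append list.size(3) list.size(4) add_Suc_right add_2_eq_Suc' append_Cons append_Nil)
      moreover have "last ([x, a] @ ?r) = x" using rp(3) rne by simp
      ultimately show ?thesis using False unfolding iC_def by simp
    qed
  qed
  have g4: "inj_on iC {h. hH V Bo E h \<and> hd h = y \<and> last h = y}"
  proof (rule inj_onI)
    fix h1 h2 assume h1: "h1 \<in> {h. hH V Bo E h \<and> hd h = y \<and> last h = y}" and h2: "h2 \<in> {h. hH V Bo E h \<and> hd h = y \<and> last h = y}"
      and e: "iC h1 = iC h2"
    have "length (iC h1) = length h1" "length (iC h2) = length h2" using g3 h1 h2 by auto
    then have l: "length h1 = length h2" using e by simp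
    show "h1 = h2"
    proof (cases "tl h1 = []")
      case True
      then have "length h1 = 1" using hy[of h1] h1 by simp
      then have "tl h2 = []" using l by (cases h2) auto
      then show ?thesis using hy[of h1] hy[of h2] h1 h2 True by simp
    next
      case False
      then have F2: "tl h2 \<noteq> []" using l by (cases h1; cases h2) auto
      have "R.Rc (butlast (tl h1)) = R.Rc (butlast (tl h2))" using e False F2 unfolding iC_def by simp
      moreover have "butlast (tl h1) \<in> {w. R.hw w \<and> hd w = z \<and> last w = z}"
        using closed_dec[of h1] h1 False hw by auto
      moreover have "butlast (tl h2) \<in> {w. R.hw w \<and> hd w = z \<and> last w = z}"
        using closed_dec[of h2] h2 F2 hw by auto
      ultimately have "butlast (tl h1) = butlast (tl h2)" using R.Rc_inj[OF zY] unfolding inj_on_def by blast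
      moreover have "h1 = y # butlast (tl h1) @ [y]" using closed_dec[of h1] h1 False by blast
      moreover have "h2 = y # butlast (tl h2) @ [y]" using closed_dec[of h2] h2 F2 by blast
      ultimately show ?thesis by metis
    qed
  qed
  have "Good iS iC" unfolding Good_def using g1 g2 g3 g4 by blast
  then show ?thesis by blast
qed

lemma stayP: "\<not> hasA \<Longrightarrow> successively (\<lambda>p q. {p,q} \<in> E) h \<Longrightarrow> set h \<subseteq> V - Bo \<Longrightarrow> h \<noteq> []
   \<Longrightarrow> hd h \<in> set P \<Longrightarrow> set h \<subseteq> set P"
proof (induction h)
  case Nil then show ?case by simp
next
  case (Cons p h)
  show ?case
  proof (cases "h = []")
    case True then show ?thesis using Cons by simp
  next
    case False
    have e: "{p, hd h} \<in> E" "successively (\<lambda>p q. {p,q} \<in> E) h" using Cons.prems(2) False by (auto simp: successively_Cons)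
    have "hd h \<notin> Bo" using Cons.prems(3) False by (cases h) auto
    then have "hd h \<in> set P" using noA_clos[OF Cons.prems(1) _ e(1)] Cons.prems(5) by simp
    then have "set h \<subseteq> set P" using Cons.IH[OF Cons.prems(1) e(2) _ False] Cons.prems(3) by auto
    then show ?thesis using Cons.prems(5) by simp
  qed
qed

definition "rho0 p = P ! (k - idx p)"

lemma rho0_edge: "p \<in> set P \<Longrightarrow> q \<in> set P \<Longrightarrow> {p,q} \<in> E \<Longrightarrow> {rho0 p, rho0 q} \<in> E"
proof -
  assume p: "p \<in> set P" and q: "q \<in> set P" and e: "{p,q} \<in> E"
  obtain i where i: "i \<le> k" "p = P ! i" using p Pbasic by (metis in_set_conv_nth less_Suc_eq_le)
  obtain j where j: "j \<le> k" "q = P ! j" using q Pbasic by (metis in_set_conv_nth less_Suc_eq_le)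
  have "j = Suc i \<or> i = Suc j" using adjP i j e by simp
  then show ?thesis
  proof
    assume ji: "j = Suc i"
    then have "Suc (k - j) = k - i" using j by simp
    then show ?thesis using Pedge[of "k - j"] i j ji idx_nth unfolding rho0_def by (simp add: insert_commute)
  next
    assume ij: "i = Suc j"
    then have "Suc (k - i) = k - j" using i by simp
    then show ?thesis using Pedge[of "k - i"] i j ij idx_nth unfolding rho0_def by simp
  qed
qed

lemma rho0_inj: "inj_on rho0 (set P)"
proof (rule inj_onI)
  fix p q assume p: "p \<in> set P" and q: "q \<in> set P" and e: "rho0 p = rho0 q"
  obtain i where i: "i \<le> k" "p = P ! i" using p Pbasic by (metis in_set_conv_nth less_Suc_eq_le)
  obtain j where j: "j \<le> k" "q = P ! j" using q Pbasic by (metis in_set_conv_nth less_Suc_eq_le)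
  have "P ! (k - i) = P ! (k - j)" using e i j idx_nth unfolding rho0_def by simp
  then have "i = j" using Pinj[of "k - i" "k - j"] i j by simp
  then show "p = q" using i j by simp
qed

lemma rho0_H: "p \<in> set P \<Longrightarrow> rho0 p \<in> V - Bo" unfolding rho0_def using HV by simp

lemma rho0_y: "rho0 y = x" unfolding rho0_def using idx_nth[of k] Pbasic by simp

lemma Good_noA:
  assumes nA: "\<not> hasA"
  shows "\<exists>iS iC. Good iS iC"
proof -
  have sP: "set h \<subseteq> set P" if "hH V Bo E h" "hd h = y" for h
    using stayP[OF nA] that Pbasic Pmem[of k] unfolding hH_def by auto
  have mp: "hH V Bo E (map rho0 h) \<and> hd (map rho0 h) = x \<and> last (map rho0 h) = rho0 (last h) \<and> length (map rho0 h) = length h"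
    if "hH V Bo E h" "hd h = y" for h
  proof -
    have s: "set h \<subseteq> set P" using sP that by blast
    have ne: "h \<noteq> []" using that hH_def by blast
    have "successively (\<lambda>p q. {rho0 p, rho0 q} \<in> E) h"
    proof (rule successively_mono[of "\<lambda>p q. {p,q} \<in> E"])
      show "successively (\<lambda>p q. {p, q} \<in> E) h" using that hH_def by blast
      fix p q assume "p \<in> set h" "q \<in> set h" "{p,q} \<in> E"
      then show "{rho0 p, rho0 q} \<in> E" using rho0_edge s by blast
    qed
    then have "hH V Bo E (map rho0 h)" using ne s rho0_H unfolding hH_def successively_map by auto
    then show ?thesis using ne that rho0_y by (simp add: hd_map last_map)
  qed
  have inj: "inj_on (map rho0) {h. hH V Bo E h \<and> hd h = y}"
  proof (rule inj_onI)
    fix h1 h2 assume a1: "h1 \<in> {h. hH V Bo E h \<and> hd h = y}" and a2: "h2 \<in> {h. hH V Bo E h \<and> hd h = y}"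
      and e: "map rho0 h1 = map rho0 h2"
    have s1: "set h1 \<subseteq> set P" using sP a1 by blast
    have s2: "set h2 \<subseteq> set P" using sP a2 by blast
    have "inj_on rho0 (set h1 \<union> set h2)" using inj_on_subset[OF rho0_inj] s1 s2 by (metis Un_subset_iff)
    then show "h1 = h2" using e inj_on_map_eq_map by blast
  qed
  have "Good (map rho0) (map rho0)" unfolding Good_def
  proof (intro conjI)
    show "\<forall>h. hH V Bo E h \<and> hd h = y \<longrightarrow> hH V Bo E (map rho0 h) \<and> hd (map rho0 h) = x \<and> length (map rho0 h) = length h"
      using mp by blast
    show "inj_on (map rho0) {h. hH V Bo E h \<and> hd h = y}" by (rule inj)
    show "\<forall>h. hH V Bo E h \<and> hd h = y \<and> last h = y \<longrightarrow>
       hH V Bo E (map rho0 h) \<and> hd (map rho0 h) = x \<and> last (map rho0 h) = x \<and> length (map rho0 h) = length h"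
      using mp rho0_y by auto
    show "inj_on (map rho0) {h. hH V Bo E h \<and> hd h = y \<and> last h = y}"
      by (rule inj_on_subset[OF inj]) auto
  qed
  then show ?thesis by blast
qed

lemma main_ineq: "num_walks V E l \<le> num_walks V E' l"
proof -
  obtain iS iC where G: "Good iS iC"
    using Good_even Good_oddA Good_noA by blast
  interpret GL: gluep Bo V E E' y x iS iC
  proof
    show "{p,q} \<in> E'" if "p \<notin> Bo" "q \<notin> Bo" "{p,q} \<in> E" for p q using A1' that by blast
    show "{p,q} \<in> E'" if "p \<in> Bo" "q \<in> Bo" "{p,q} \<in> E" for p q using A2' that by blast
    show "p = y \<and> {x,q} \<in> E'" if "p \<notin> Bo" "q \<in> Bo" "{p,q} \<in> E" for p q using A3' that by blast
  qed (use G Good_def in blast)+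
  have fin: "finite V" using sg simple_graph_def by blast
  show ?thesis unfolding num_walks_def is_walk_succ using GL.glue_card[OF fin, of "Suc l"] by simp
qed

end


theorem theorem2:
  fixes V :: "'a set" and E :: "'a set set" and x y :: 'a and P :: "'a list" and l :: nat
  assumes "tree V E"
    and "x \<in> V" and "y \<in> V" and "x \<noteq> y"
    and "is_path V E P" and "hd P = x" and "last P = y"
    and "\<forall>v \<in> set P - {x, y}. degree E v = 2"
    and "l \<ge> 1"
  shows "num_walks V E l \<le> num_walks V (kc_transform E x y (P ! (length P - 2))) l"
proof -
  interpret K: kcset V E x y P using assms by unfold_locales
  have "P ! (length P - 2) = K.z" unfolding K.z_def K.k_def by (simp add: numeral_2_eq_2)
  then show ?thesis using K.main_ineq[of l] unfolding K.E'_def by simp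
qed

end
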